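(* For $i=1,2$ let $A_i\xrightarrow{f_i}B_i\xrightarrow{g_i}C_i$ be based cofibration sequences (so $f_i$ is a based cofibration and $g_i$ the quotient map $B_i\to C_i=B_i/A_i$). Suppose $a:A_1\to\mathrm{SP}(A_2)$, $b:B_1\to\mathrm{SP}(B_2)$, $c:C_1\to\mathrm{SP}(C_2)$ are based maps with $b\circ f_1=\mathrm{SP}(f_2)\circ a$ and $c\circ g_1=\mathrm{SP}(g_2)\circ b$. Then the induced maps $a^*,b^*,c^*$ give a map between the long exact sequences in reduced cohomology of the two cofibration sequences; that is, $b^*g_2^*=g_1^*c^*$, $a^*f_2^*=f_1^*b^*$ and $c^*\partial_2^*=\partial_1^*a^*$, where $\partial_i^*:\widetilde{H}^*(A_i)\to\widetilde{H}^{*+1}(C_i)$ are the connecting homomorphisms.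
   Context: For a based space $(X,e)$, $\mathrm{SP}(X)$ is the free unital abelian monoid on $X$ with identity $e$, topologised as the quotient of $\bigsqcup_{n\ge1}X^n/\mathfrak{S}_n$ by $(x_1,\dots,x_n,e)\sim(x_1,\dots,x_n)$, with inclusion $\iota_X:X\to\mathrm{SP}(X)$; a based map $h$ induces the homomorphism $\mathrm{SP}(h)$. Identify $\widetilde{H}^n(Y)=[Y,\mathrm{SP}(S^n)]_*$. For $\alpha:Y\to\mathrm{SP}(S^n)$ let $\widetilde\alpha:\mathrm{SP}(Y)\to\mathrm{SP}(S^n)$ be the unique continuous monoid homomorphism with $\widetilde\alpha\circ\iota_Y=\alpha$, and for a based map $f:X\to\mathrm{SP}(Y)$ define $f^*:\widetilde H^*(Y)\to\widetilde H^*(X)$ by $f^*[\alpha]=[\widetilde\alpha\circ f]$. *)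

theory Defs
  imports "HOL-Analysis.Analysis" "HOL-Library.Multiset"
begin

abbreviation unitI :: "real topology" where
  "unitI \<equiv> top_of_set {0..1}"

definition based_map :: "'a topology \<Rightarrow> 'a \<Rightarrow> 'b topology \<Rightarrow> 'b \<Rightarrow> ('a \<Rightarrow> 'b) \<Rightarrow> bool" where
  "based_map X x0 Y y0 h \<longleftrightarrow> continuous_map X Y h \<and> h x0 = y0"

text \<open>Points of SP(X) are finite multisets of points of X different from the base
point e (the base point is the identity of the free unital abelian monoid; the empty
multiset is the identity).  SP(X) carries the quotient topology of the disjoint
union of the X^n (n \<ge> 1), i.e. U is open iff all its preimages in X^n are open.\<close>

definition sp_carrier :: "'a topology \<Rightarrow> 'a \<Rightarrow> 'a multiset set" where
  "sp_carrier X e = {M. set_mset M \<subseteq> topspace X - {e}}"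

definition sp_word :: "'a \<Rightarrow> nat \<Rightarrow> (nat \<Rightarrow> 'a) \<Rightarrow> 'a multiset" where
  "sp_word e n u = filter_mset (\<lambda>x. x \<noteq> e) (mset (map u [0..<n]))"

definition SP :: "'a topology \<Rightarrow> 'a \<Rightarrow> 'a multiset topology" where
  "SP X e = topology (\<lambda>U. U \<subseteq> sp_carrier X e \<and>
      (\<forall>n\<ge>1. openin (product_topology (\<lambda>_. X) {..<n})
          {u \<in> topspace (product_topology (\<lambda>_. X) {..<n}). sp_word e n u \<in> U}))"

definition sp_iota :: "'a \<Rightarrow> 'a \<Rightarrow> 'a multiset" where
  "sp_iota e x = (if x = e then {#} else {#x#})"

definition SPmap :: "'b \<Rightarrow> ('a \<Rightarrow> 'b) \<Rightarrow> 'a multiset \<Rightarrow> 'b multiset" where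
  "SPmap e' h M = filter_mset (\<lambda>y. y \<noteq> e') (image_mset h M)"

text \<open>The monoid homomorphism SP(Y) \<rightarrow> SP(S^n) extending \<alpha> : Y \<rightarrow> SP(S^n)
(the monoid operation on SP(S^n) is multiset union, identity the empty multiset).\<close>
definition sp_ext :: "('a \<Rightarrow> 'b multiset) \<Rightarrow> 'a multiset \<Rightarrow> 'b multiset" where
  "sp_ext \<alpha> M = sum_mset (image_mset \<alpha> M)"

section \<open>Spheres: S^n = I^n / \<partial>I^n, base point None\<close>

definition cube_top :: "nat \<Rightarrow> (nat \<Rightarrow> real) topology" where
  "cube_top n = product_topology (\<lambda>_. unitI) {..<n}"

definition cube_q :: "nat \<Rightarrow> (nat \<Rightarrow> real) \<Rightarrow> (nat \<Rightarrow> real) option" where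
  "cube_q n u = (if \<exists>i<n. u i = 0 \<or> u i = 1 then None else Some u)"

definition sphere :: "nat \<Rightarrow> (nat \<Rightarrow> real) option topology" where
  "sphere n = topology (\<lambda>U. U \<subseteq> insert None (cube_q n ` topspace (cube_top n)) \<and>
      openin (cube_top n) {u \<in> topspace (cube_top n). cube_q n u \<in> U})"

text \<open>The canonical map S^n \<times> I \<rightarrow> S^(n+1) inducing S^n \<and> S^1 \<cong> S^(n+1)
(the suspension coordinate becomes the last cube coordinate).\<close>
definition susp_pt :: "nat \<Rightarrow> (nat \<Rightarrow> real) option \<Rightarrow> real \<Rightarrow> (nat \<Rightarrow> real) option" where
  "susp_pt n y s = (case y of None \<Rightarrow> None
     | Some u \<Rightarrow> (if s \<le> 0 \<or> 1 \<le> s then None else Some (u(n := s))))"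

abbreviation SPS :: "nat \<Rightarrow> (nat \<Rightarrow> real) option multiset topology" where
  "SPS n \<equiv> SP (sphere n) None"

section \<open>Reduced cohomology  H^n(Y) = [Y, SP(S^n)]_*\<close>

definition cocycle :: "'a topology \<Rightarrow> 'a \<Rightarrow> nat \<Rightarrow> ('a \<Rightarrow> (nat \<Rightarrow> real) option multiset) \<Rightarrow> bool" where
  "cocycle Y y0 n \<alpha> \<longleftrightarrow> based_map Y y0 (SPS n) {#} \<alpha>"

definition hcls :: "'a topology \<Rightarrow> 'a \<Rightarrow> nat \<Rightarrow> ('a \<Rightarrow> (nat \<Rightarrow> real) option multiset)
     \<Rightarrow> ('a \<Rightarrow> (nat \<Rightarrow> real) option multiset) set" where
  "hcls Y y0 n \<alpha> = {\<beta>. cocycle Y y0 n \<beta> \<and> homotopic_with (\<lambda>h. h y0 = {#}) Y (SPS n) \<alpha> \<beta>}"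

definition Hred :: "'a topology \<Rightarrow> 'a \<Rightarrow> nat \<Rightarrow> ('a \<Rightarrow> (nat \<Rightarrow> real) option multiset) set set" where
  "Hred Y y0 n = {hcls Y y0 n \<alpha> | \<alpha>. cocycle Y y0 n \<alpha>}"

abbreviation rep :: "('a \<Rightarrow> 'b) set \<Rightarrow> 'a \<Rightarrow> 'b" where
  "rep \<kappa> \<equiv> (SOME \<alpha>. \<alpha> \<in> \<kappa>)"

definition sp_pull :: "'x topology \<Rightarrow> 'x \<Rightarrow> nat \<Rightarrow> ('x \<Rightarrow> 'y multiset)
    \<Rightarrow> ('y \<Rightarrow> (nat \<Rightarrow> real) option multiset) set \<Rightarrow> ('x \<Rightarrow> (nat \<Rightarrow> real) option multiset) set" where
  "sp_pull X x0 n f \<kappa> = hcls X x0 n (sp_ext (rep \<kappa>) \<circ> f)"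

definition pull :: "'x topology \<Rightarrow> 'x \<Rightarrow> nat \<Rightarrow> ('x \<Rightarrow> 'y)
    \<Rightarrow> ('y \<Rightarrow> (nat \<Rightarrow> real) option multiset) set \<Rightarrow> ('x \<Rightarrow> (nat \<Rightarrow> real) option multiset) set" where
  "pull X x0 n g \<kappa> = hcls X x0 n (rep \<kappa> \<circ> g)"

text \<open>Test spaces range over all topologies on the
type ('a + 'b) \<times> real, which is large enough to contain the reduced mapping cylinder of f
(the universal test space), so this is equivalent to the HEP for all based spaces.\<close>
definition based_cofibration :: "'a topology \<Rightarrow> 'a \<Rightarrow> 'b topology \<Rightarrow> 'b \<Rightarrow> ('a \<Rightarrow> 'b) \<Rightarrow> bool" where
  "based_cofibration A a0 B b0 f \<longleftrightarrow> a0 \<in> topspace A \<and> based_map A a0 B b0 f \<and>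
     (\<forall>(Z :: (('a + 'b) \<times> real) topology) z0 h G.
        z0 \<in> topspace Z \<and> based_map B b0 Z z0 h \<and>
        continuous_map (prod_topology A unitI) Z G \<and>
        (\<forall>x\<in>topspace A. G (x, 0) = h (f x)) \<and> (\<forall>t\<in>{0..1}. G (a0, t) = z0)
        \<longrightarrow> (\<exists>H. continuous_map (prod_topology B unitI) Z H \<and>
               (\<forall>b\<in>topspace B. H (b, 0) = h b) \<and>
               (\<forall>x\<in>topspace A. \<forall>t\<in>{0..1}. H (f x, t) = G (x, t)) \<and>
               (\<forall>t\<in>{0..1}. H (b0, t) = z0)))"

definition based_cofib_seq :: "'a topology \<Rightarrow> 'a \<Rightarrow> 'b topology \<Rightarrow> 'b \<Rightarrow> 'c topology \<Rightarrow> 'c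
     \<Rightarrow> ('a \<Rightarrow> 'b) \<Rightarrow> ('b \<Rightarrow> 'c) \<Rightarrow> bool" where
  "based_cofib_seq A a0 B b0 C c0 f g \<longleftrightarrow>
     based_cofibration A a0 B b0 f \<and> quotient_map B C g \<and> g b0 = c0 \<and>
     (\<forall>x\<in>topspace A. g (f x) = c0) \<and>
     (\<forall>b\<in>topspace B. \<forall>b'\<in>topspace B. g b = g b' \<longrightarrow>
         b = b' \<or> (b \<in> f ` topspace A \<and> b' \<in> f ` topspace A))"

text \<open>Suspension of \<alpha> : A \<rightarrow> SP(S^n): the map \<Sigma>A \<rightarrow> SP(S^(n+1)), written on A \<times> I.\<close>
definition susp_cocycle :: "nat \<Rightarrow> ('a \<Rightarrow> (nat \<Rightarrow> real) option multiset) \<Rightarrow> 'a \<times> real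
     \<Rightarrow> (nat \<Rightarrow> real) option multiset" where
  "susp_cocycle n \<alpha> xs = SPmap None (\<lambda>y. susp_pt n y (snd xs)) (\<alpha> (fst xs))"

text \<open>With Cf = B \<union>_f CA the reduced mapping cone, q : Cf \<rightarrow> C the collapse (a based
homotopy equivalence since f is a cofibration) and \<delta> : Cf \<rightarrow> \<Sigma>A the collapse of B,
\<partial>*[\<alpha>] is the unique class [\<beta>] with \<beta> \<circ> q \<simeq> \<Sigma>\<alpha> \<circ> \<delta> (based).  A based homotopy
Cf \<times> I \<rightarrow> SP(S^(n+1)) is written out as a pair of compatible homotopies on B \<times> I and
on the cone (A \<times> I) \<times> I (cone point at s = 1).\<close>
definition conn_rel :: "'a topology \<Rightarrow> 'a \<Rightarrow> 'b topology \<Rightarrow> 'b \<Rightarrow> ('a \<Rightarrow> 'b) \<Rightarrow> ('b \<Rightarrow> 'c)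
     \<Rightarrow> nat \<Rightarrow> ('a \<Rightarrow> (nat \<Rightarrow> real) option multiset) \<Rightarrow> ('c \<Rightarrow> (nat \<Rightarrow> real) option multiset) \<Rightarrow> bool" where
  "conn_rel A a0 B b0 f g n \<alpha> \<beta> \<longleftrightarrow>
     (\<exists>HB HA.
        continuous_map (prod_topology B unitI) (SPS (Suc n)) HB \<and>
        continuous_map (prod_topology (prod_topology A unitI) unitI) (SPS (Suc n)) HA \<and>
        (\<forall>b\<in>topspace B. HB (b, 0) = \<beta> (g b) \<and> HB (b, 1) = {#}) \<and>
        (\<forall>t\<in>{0..1}. HB (b0, t) = {#}) \<and>
        (\<forall>x\<in>topspace A. \<forall>s\<in>{0..1}.
            HA ((x, s), 0) = {#} \<and> HA ((x, s), 1) = susp_cocycle n \<alpha> (x, s)) \<and>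
        (\<forall>x\<in>topspace A. \<forall>t\<in>{0..1}. HA ((x, 0), t) = HB (f x, t) \<and> HA ((x, 1), t) = {#}) \<and>
        (\<forall>s\<in>{0..1}. \<forall>t\<in>{0..1}. HA ((a0, s), t) = {#}))"

definition connecting :: "'a topology \<Rightarrow> 'a \<Rightarrow> 'b topology \<Rightarrow> 'b \<Rightarrow> 'c topology \<Rightarrow> 'c
     \<Rightarrow> ('a \<Rightarrow> 'b) \<Rightarrow> ('b \<Rightarrow> 'c) \<Rightarrow> nat
     \<Rightarrow> ('a \<Rightarrow> (nat \<Rightarrow> real) option multiset) set \<Rightarrow> ('c \<Rightarrow> (nat \<Rightarrow> real) option multiset) set" where
  "connecting A a0 B b0 C c0 f g n \<kappa> =
     hcls C c0 (Suc n) (SOME \<beta>. cocycle C c0 (Suc n) \<beta> \<and> conn_rel A a0 B b0 f g n (rep \<kappa>) \<beta>)"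

end

theory Submission
  imports Defs
begin


abbreviation PT :: "'a topology \<Rightarrow> nat \<Rightarrow> (nat \<Rightarrow> 'a) topology" where
  "PT X n \<equiv> product_topology (\<lambda>_. X) {..<n}"

lemma continuous_from_prod_sum:
  assumes "\<And>i. i \<in> I \<Longrightarrow> continuous_map (prod_topology Z (X i)) W (\<lambda>(z,x). \<psi> (z,(i,x)))"
  shows "continuous_map (prod_topology Z (sum_topology X I)) W \<psi>"
  unfolding continuous_map_def
proof (intro conjI allI impI)
  show "\<psi> \<in> topspace (prod_topology Z (sum_topology X I)) \<rightarrow> topspace W"
  proof
    fix p assume "p \<in> topspace (prod_topology Z (sum_topology X I))"
    then obtain z i x where p: "p = (z,(i,x))" "z \<in> topspace Z" "i \<in> I" "x \<in> topspace (X i)"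
      by auto
    have "(\<lambda>(z,x). \<psi> (z,(i,x))) (z,x) \<in> topspace W"
      using continuous_map_image_subset_topspace[OF assms[OF p(3)]] p by (force simp: image_subset_iff)
    then show "\<psi> p \<in> topspace W" using p by simp
  qed
next
  fix U assume U: "openin W U"
  show "openin (prod_topology Z (sum_topology X I)) {p \<in> topspace (prod_topology Z (sum_topology X I)). \<psi> p \<in> U}"
    (is "openin _ ?P")
  proof (subst openin_subopen, intro ballI)
    fix p assume "p \<in> ?P"
    then obtain z i x where p: "p = (z,(i,x))" "z \<in> topspace Z" "i \<in> I" "x \<in> topspace (X i)" "\<psi> (z,(i,x)) \<in> U"
      by auto
    have op: "openin (prod_topology Z (X i)) {q \<in> topspace (prod_topology Z (X i)). (\<lambda>(z,x). \<psi> (z,(i,x))) q \<in> U}"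
      using assms[OF p(3)] U by (simp add: continuous_map_def)
    have mem: "(z,x) \<in> {q \<in> topspace (prod_topology Z (X i)). (\<lambda>(z,x). \<psi> (z,(i,x))) q \<in> U}"
      using p by auto
    have "\<exists>V Oo. openin Z V \<and> openin (X i) Oo \<and> z \<in> V \<and> x \<in> Oo \<and> V \<times> Oo \<subseteq> {q \<in> topspace (prod_topology Z (X i)). (\<lambda>(z,x). \<psi> (z,(i,x))) q \<in> U}"
      using op[unfolded openin_prod_topology_alt, rule_format, OF mem] .
    then obtain V Oo where VO: "openin Z V" "openin (X i) Oo" "z \<in> V" "x \<in> Oo"
        "V \<times> Oo \<subseteq> {q \<in> topspace (prod_topology Z (X i)). (\<lambda>(z,x). \<psi> (z,(i,x))) q \<in> U}"
      by (elim exE conjE) (rule that)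
    have o2: "openin (sum_topology X I) (Pair i ` Oo)"
      using open_map_component_injection[OF p(3), of X, unfolded open_map_def] VO(2) by blast
    have "openin (prod_topology Z (sum_topology X I)) (V \<times> Pair i ` Oo)"
      using VO(1) o2 by (simp add: openin_prod_Times_iff)
    moreover have "p \<in> V \<times> Pair i ` Oo" using p VO by auto
    moreover have "V \<times> Pair i ` Oo \<subseteq> ?P"
    proof
      fix q assume "q \<in> V \<times> Pair i ` Oo"
      then obtain z' x' where q: "q = (z',(i,x'))" "z' \<in> V" "x' \<in> Oo" by auto
      then have "(z',x') \<in> {q \<in> topspace (prod_topology Z (X i)). (\<lambda>(z,x). \<psi> (z,(i,x))) q \<in> U}"
        using VO(5) by (meson mem_Sigma_iff subsetD)
      then show "q \<in> ?P" using q p(3) by simp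
    qed
    ultimately show "\<exists>T. openin (prod_topology Z (sum_topology X I)) T \<and> p \<in> T \<and> T \<subseteq> ?P"
      by (intro exI conjI)
  qed
qed

lemma continuous_map_quotient_sum_prod:
  assumes Z: "locally_compact_space Z" "Hausdorff_space Z"
    and Q: "quotient_map (sum_topology X I) Y Q"
    and c: "\<And>i. i \<in> I \<Longrightarrow> continuous_map (prod_topology Z (X i)) W (\<lambda>(z,x). \<phi> (z, Q (i,x)))"
  shows "continuous_map (prod_topology Z Y) W \<phi>"
proof -
  have qm: "quotient_map (prod_topology Z (sum_topology X I)) (prod_topology Z Y) (\<lambda>(z,s). (z, Q s))"
    using quotient_map_prod_right[OF Z(1) _ Q] Z(2) by blast
  have "continuous_map (prod_topology Z (sum_topology X I)) W (\<phi> \<circ> (\<lambda>(z,s). (z, Q s)))"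
  proof (rule continuous_from_prod_sum)
    fix i assume "i \<in> I"
    then show "continuous_map (prod_topology Z (X i)) W (\<lambda>(z, x). (\<phi> \<circ> (\<lambda>(z, s). (z, Q s))) (z, i, x))"
      using c[of i] by (simp add: o_def)
  qed
  then show ?thesis using continuous_compose_quotient_map[OF qm] by blast
qed


section \<open>Basic facts on SP\<close>

lemma cm_in: "continuous_map X Y f \<Longrightarrow> x \<in> topspace X \<Longrightarrow> f x \<in> topspace Y"
  by (meson continuous_map_image_subset_topspace image_subset_iff)

lemma SP_istopology:
  "istopology (\<lambda>U. U \<subseteq> sp_carrier X e \<and>
      (\<forall>n\<ge>1. openin (product_topology (\<lambda>_. X) {..<n})
          {u \<in> topspace (product_topology (\<lambda>_. X) {..<n}). sp_word e n u \<in> U}))"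
proof -
  have int: "{u \<in> topspace (PT X n). sp_word e n u \<in> S \<inter> T} =
          {u \<in> topspace (PT X n). sp_word e n u \<in> S} \<inter> {u \<in> topspace (PT X n). sp_word e n u \<in> T}"
    for S T n by blast
  have un: "{u \<in> topspace (PT X n). sp_word e n u \<in> \<Union>K} =
          \<Union>((\<lambda>S. {u \<in> topspace (PT X n). sp_word e n u \<in> S}) ` K)" for K n
    by blast
  show ?thesis
    unfolding istopology_def int un
    by (auto intro!: openin_Int openin_Union)
qed

lemma openin_SP:
  "openin (SP X e) U \<longleftrightarrow> U \<subseteq> sp_carrier X e \<and>
      (\<forall>n\<ge>1. openin (PT X n) {u \<in> topspace (PT X n). sp_word e n u \<in> U})"
  unfolding SP_def topology_inverse'[OF SP_istopology] by (rule refl)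

lemma sp_word_carrier:
  assumes "u \<in> topspace (PT X n)"
  shows "sp_word e n u \<in> sp_carrier X e"
  using assms by (auto simp: sp_word_def sp_carrier_def PiE_iff)

lemma topspace_SP [simp]: "topspace (SP X e) = sp_carrier X e"
proof -
  have "openin (SP X e) (sp_carrier X e)"
    unfolding openin_SP
  proof (intro conjI allI impI subset_refl)
    fix n :: nat assume "n \<ge> 1"
    have "{u \<in> topspace (PT X n). sp_word e n u \<in> sp_carrier X e} = topspace (PT X n)"
    proof -
      have "\<forall>u\<in>topspace (PT X n). sp_word e n u \<in> sp_carrier X e"
      proof
        fix u assume "u \<in> topspace (PT X n)"
        then show "sp_word e n u \<in> sp_carrier X e" by (rule sp_word_carrier)
      qed
      then show ?thesis by blast
    qed
    then show "openin (PT X n) {u \<in> topspace (PT X n). sp_word e n u \<in> sp_carrier X e}"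
      by (simp only: openin_topspace)
  qed
  then have "sp_carrier X e \<subseteq> topspace (SP X e)" by (rule openin_subset)
  moreover have "topspace (SP X e) \<subseteq> sp_carrier X e"
    using openin_SP[of X e "topspace (SP X e)"] by simp
  ultimately show ?thesis by blast
qed

lemma sp_word_0 [simp]: "sp_word e 0 u = {#}"
  by (simp add: sp_word_def)

lemma sp_word_Suc:
  "sp_word e (Suc n) u = sp_word e n u + (if u n = e then {#} else {#u n#})"
  by (simp add: sp_word_def)

lemma empty_sp_carrier [simp]: "{#} \<in> sp_carrier X e"
  by (simp add: sp_carrier_def)

lemma continuous_map_sp_word: "continuous_map (PT X n) (SP X e) (sp_word e n)"
proof (cases "n \<ge> 1")
  case True
  show ?thesis
    unfolding continuous_map_def
  proof (intro conjI allI impI)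
    show "sp_word e n \<in> topspace (PT X n) \<rightarrow> topspace (SP X e)"
      using sp_word_carrier by fastforce
    fix U assume "openin (SP X e) U"
    then show "openin (PT X n) {x \<in> topspace (PT X n). sp_word e n x \<in> U}"
      using True unfolding openin_SP by blast
  qed
next
  case False
  then have "n = 0" by simp
  moreover have "sp_word e 0 = (\<lambda>_. {#})" by (simp add: fun_eq_iff)
  ultimately show ?thesis by (simp add: continuous_map_const)
qed

lemma sp_word_surj:
  assumes M: "M \<in> sp_carrier X e" and e: "e \<in> topspace X" and n: "size M \<le> n"
  shows "\<exists>u \<in> topspace (PT X n). sp_word e n u = M"
proof -
  obtain xs where xs: "mset xs = M" by (metis ex_mset)
  define u where "u = (\<lambda>i. if i < n then (if i < length xs then xs ! i else e) else undefined)"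
  have len: "length xs \<le> n" using n xs by auto
  have map: "map u [0..<n] = xs @ replicate (n - length xs) e"
    by (rule nth_equalityI) (use len in \<open>auto simp: u_def nth_append\<close>)
  have xse: "e \<notin> set xs" using M xs by (auto simp: sp_carrier_def)
  have "sp_word e n u = filter_mset (\<lambda>x. x \<noteq> e) (mset xs) + filter_mset (\<lambda>x. x \<noteq> e) (replicate_mset (n - length xs) e)"
    by (simp add: sp_word_def map)
  also have "filter_mset (\<lambda>x. x \<noteq> e) (mset xs) = mset xs"
    using xse by (induct xs) auto
  also have "filter_mset (\<lambda>x. x \<noteq> e) (replicate_mset (n - length xs) e) = {#}"
    by (induct "n - length xs") auto
  finally have "sp_word e n u = M" using xs by simp
  moreover have "u \<in> topspace (PT X n)"
  proof -
    have "set xs \<subseteq> topspace X" using M xs by (auto simp: sp_carrier_def)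
    then show ?thesis using e nth_mem by (fastforce simp: u_def PiE_iff extensional_def)
  qed
  ultimately show ?thesis by blast
qed

lemma quotient_map_SP:
  assumes e: "e \<in> topspace X"
  shows "quotient_map (sum_topology (PT X) {1..}) (SP X e) (\<lambda>(n,u). sp_word e n u)"
  unfolding quotient_map_def
proof (intro conjI allI impI)
  show "(\<lambda>(n, u). sp_word e n u) ` topspace (sum_topology (PT X) {1..}) = topspace (SP X e)"
  proof
    show "(\<lambda>(n, u). sp_word e n u) ` topspace (sum_topology (PT X) {1..}) \<subseteq> topspace (SP X e)"
      using sp_word_carrier by fastforce
    show "topspace (SP X e) \<subseteq> (\<lambda>(n, u). sp_word e n u) ` topspace (sum_topology (PT X) {1..})"
    proof
      fix M assume "M \<in> topspace (SP X e)"
      then obtain u where u: "u \<in> topspace (PT X (max 1 (size M)))" "sp_word e (max 1 (size M)) u = M"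
        using sp_word_surj[of M X e "max 1 (size M)"] e by auto
      then show "M \<in> (\<lambda>(n, u). sp_word e n u) ` topspace (sum_topology (PT X) {1..})"
        by (force intro!: image_eqI[of _ _ "(max 1 (size M), u)"])
    qed
  qed
  fix U assume "U \<subseteq> topspace (SP X e)"
  then show "openin (sum_topology (PT X) {1..}) {x \<in> topspace (sum_topology (PT X) {1..}). (case x of (n, u) \<Rightarrow> sp_word e n u) \<in> U} = openin (SP X e) U"
    by (auto simp: openin_sum_topology openin_SP)
qed

lemma continuous_map_from_SP_prod:
  assumes Z: "locally_compact_space Z" "Hausdorff_space Z" and e: "e \<in> topspace X"
    and c: "\<And>n. n \<ge> 1 \<Longrightarrow> continuous_map (prod_topology Z (PT X n)) W (\<lambda>(z,u). \<phi> (z, sp_word e n u))"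
  shows "continuous_map (prod_topology Z (SP X e)) W \<phi>"
  by (rule continuous_map_quotient_sum_prod[OF Z quotient_map_SP[OF e]]) (use c in auto)

lemma continuous_map_from_SP:
  assumes e: "e \<in> topspace X"
    and c: "\<And>n. n \<ge> 1 \<Longrightarrow> continuous_map (PT X n) W (\<lambda>u. \<phi> (sp_word e n u))"
  shows "continuous_map (SP X e) W \<phi>"
  unfolding continuous_map_def
proof (intro conjI allI impI)
  show "\<phi> \<in> topspace (SP X e) \<rightarrow> topspace W"
  proof
    fix M assume "M \<in> topspace (SP X e)"
    then obtain u where u: "u \<in> topspace (PT X (max 1 (size M)))" "sp_word e (max 1 (size M)) u = M"
      using sp_word_surj[of M X e "max 1 (size M)"] e by auto
    have "continuous_map (PT X (max 1 (size M))) W (\<lambda>u. \<phi> (sp_word e (max 1 (size M)) u))"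
      using c by simp
    from cm_in[OF this u(1)] show "\<phi> M \<in> topspace W" using u(2) by simp
  qed
  fix U assume U: "openin W U"
  show "openin (SP X e) {x \<in> topspace (SP X e). \<phi> x \<in> U}"
    unfolding openin_SP
  proof (intro conjI allI impI)
    show "{x \<in> topspace (SP X e). \<phi> x \<in> U} \<subseteq> sp_carrier X e" by auto
    fix n :: nat assume "n \<ge> 1"
    have "{u \<in> topspace (PT X n). sp_word e n u \<in> {x \<in> topspace (SP X e). \<phi> x \<in> U}} =
          {u \<in> topspace (PT X n). \<phi> (sp_word e n u) \<in> U}"
      using sp_word_carrier by fastforce
    then show "openin (PT X n) {u \<in> topspace (PT X n). sp_word e n u \<in> {x \<in> topspace (SP X e). \<phi> x \<in> U}}"
      using c[OF \<open>n \<ge> 1\<close>] U by (simp add: continuous_map_def)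
  qed
qed

lemma sp_ext_empty [simp]: "sp_ext \<alpha> {#} = {#}"
  by (simp add: sp_ext_def)

lemma sp_ext_add [simp]: "sp_ext \<alpha> (M + N) = sp_ext \<alpha> M + sp_ext \<alpha> N"
  by (simp add: sp_ext_def)

lemma sp_ext_single [simp]: "sp_ext \<alpha> {#x#} = \<alpha> x"
  by (simp add: sp_ext_def)

lemma sp_ext_add_mset [simp]: "sp_ext \<alpha> (add_mset x M) = \<alpha> x + sp_ext \<alpha> M"
  by (simp add: sp_ext_def)

lemma sp_ext_sp_word:
  assumes "\<alpha> e = {#}"
  shows "sp_ext \<alpha> (sp_word e n u) = (\<Sum>i<n. \<alpha> (u i))"
  by (induct n) (use assms in \<open>auto simp: sp_word_Suc\<close>)

lemma SPmap_empty [simp]: "SPmap e h {#} = {#}"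
  by (simp add: SPmap_def)

lemma SPmap_add [simp]: "SPmap e h (M + N) = SPmap e h M + SPmap e h N"
  by (simp add: SPmap_def)

lemma SPmap_add_mset:
  "SPmap e h (add_mset x M) = (if h x = e then SPmap e h M else add_mset (h x) (SPmap e h M))"
  by (simp add: SPmap_def)

lemma SPmap_sp_word:
  assumes "h e = e'"
  shows "SPmap e' h (sp_word e n u) = sp_word e' n (h \<circ> u)"
  by (induct n) (use assms in \<open>auto simp: sp_word_Suc SPmap_add_mset\<close>)

lemma sp_ext_SPmap:
  assumes "\<alpha> e' = {#}"
  shows "sp_ext \<alpha> (SPmap e' h M) = sp_ext (\<alpha> \<circ> h) M"
  by (induct M) (use assms in \<open>auto simp: SPmap_add_mset\<close>)

lemma sp_carrier_add:
  "M \<in> sp_carrier X e \<Longrightarrow> N \<in> sp_carrier X e \<Longrightarrow> M + N \<in> sp_carrier X e"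
  by (auto simp: sp_carrier_def)

lemma sp_ext_carrier:
  assumes "\<And>y. y \<in># M \<Longrightarrow> \<alpha> y \<in> sp_carrier S e"
  shows "sp_ext \<alpha> M \<in> sp_carrier S e"
  using assms by (induct M) (auto intro: sp_carrier_add)

lemma sum_sp_carrier:
  assumes "\<And>i. i \<in> A \<Longrightarrow> f i \<in> sp_carrier S e"
  shows "sum f A \<in> sp_carrier S e"
  using assms by (induct A rule: infinite_finite_induct) (auto intro: sp_carrier_add)


section \<open>Spheres\<close>

definition intr :: "nat \<Rightarrow> (nat \<Rightarrow> real) set" where
  "intr n = {u \<in> topspace (cube_top n). \<forall>i<n. 0 < u i \<and> u i < 1}"

lemma topspace_cube: "topspace (cube_top n) = PiE {..<n} (\<lambda>_. {0..1::real})"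
  by (simp add: cube_top_def)

lemma intr_sub: "intr n \<subseteq> topspace (cube_top n)"
  by (auto simp: intr_def)

lemma cube_q_eq:
  assumes "u \<in> topspace (cube_top n)"
  shows "cube_q n u = (if u \<in> intr n then Some u else None)"
proof -
  have "\<forall>i<n. 0 \<le> u i \<and> u i \<le> 1" using assms by (auto simp: topspace_cube PiE_iff)
  then have "(\<exists>i<n. u i = 0 \<or> u i = 1) \<longleftrightarrow> u \<notin> intr n"
    using assms unfolding intr_def by (auto simp: order_less_le)
  then show ?thesis by (simp add: cube_q_def)
qed

lemma sphere_istopology:
  "istopology (\<lambda>U. U \<subseteq> insert None (cube_q n ` topspace (cube_top n)) \<and>
      openin (cube_top n) {u \<in> topspace (cube_top n). cube_q n u \<in> U})"
proof -
  have int: "{u \<in> topspace (cube_top n). cube_q n u \<in> S \<inter> T} =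
     {u \<in> topspace (cube_top n). cube_q n u \<in> S} \<inter> {u \<in> topspace (cube_top n). cube_q n u \<in> T}" for S T
    by blast
  have un: "{u \<in> topspace (cube_top n). cube_q n u \<in> \<Union>K} =
      \<Union>((\<lambda>S. {u \<in> topspace (cube_top n). cube_q n u \<in> S}) ` K)" for K by blast
  show ?thesis unfolding istopology_def int un
    by (auto intro!: openin_Int openin_Union)
qed

lemma openin_sphere:
  "openin (sphere n) U \<longleftrightarrow> U \<subseteq> insert None (cube_q n ` topspace (cube_top n)) \<and>
      openin (cube_top n) {u \<in> topspace (cube_top n). cube_q n u \<in> U}"
  unfolding sphere_def topology_inverse'[OF sphere_istopology] by (rule refl)

lemma cube_q_image: "insert None (cube_q n ` topspace (cube_top n)) = insert None (Some ` intr n)"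
proof
  show "insert None (cube_q n ` topspace (cube_top n)) \<subseteq> insert None (Some ` intr n)"
    using cube_q_eq by fastforce
  show "insert None (Some ` intr n) \<subseteq> insert None (cube_q n ` topspace (cube_top n))"
  proof
    fix y assume "y \<in> insert None (Some ` intr n)"
    then show "y \<in> insert None (cube_q n ` topspace (cube_top n))"
    proof
      assume "y \<in> Some ` intr n"
      then obtain u where "u \<in> intr n" "y = Some u" by blast
      then have "y = cube_q n u" "u \<in> topspace (cube_top n)" using intr_sub[of n] cube_q_eq[of u n] by auto
      then show ?thesis by blast
    qed simp
  qed
qed

lemma topspace_sphere: "topspace (sphere n) = insert None (Some ` intr n)"
proof -
  have "openin (sphere n) (insert None (cube_q n ` topspace (cube_top n)))"
    unfolding openin_sphere
  proof
    have "{u \<in> topspace (cube_top n). cube_q n u \<in> insert None (cube_q n ` topspace (cube_top n))} = topspace (cube_top n)"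
      by blast
    then show "openin (cube_top n) {u \<in> topspace (cube_top n). cube_q n u \<in> insert None (cube_q n ` topspace (cube_top n))}"
      by (simp only: openin_topspace)
  qed simp
  then have "insert None (cube_q n ` topspace (cube_top n)) \<subseteq> topspace (sphere n)"
    by (rule openin_subset)
  moreover have "topspace (sphere n) \<subseteq> insert None (cube_q n ` topspace (cube_top n))"
    using openin_sphere[of n "topspace (sphere n)"] by simp
  ultimately show ?thesis using cube_q_image[of n] by (metis subset_antisym)
qed

lemma None_in_sphere [simp]: "None \<in> topspace (sphere n)"
  by (simp add: topspace_sphere)

lemma continuous_map_cube_q: "continuous_map (cube_top n) (sphere n) (cube_q n)"
  unfolding continuous_map_def
proof (intro conjI allI impI)
  show "cube_q n \<in> topspace (cube_top n) \<rightarrow> topspace (sphere n)"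
    using cube_q_eq by (auto simp: topspace_sphere)
  fix U assume "openin (sphere n) U"
  then show "openin (cube_top n) {x \<in> topspace (cube_top n). cube_q n x \<in> U}"
    unfolding openin_sphere by blast
qed

lemma openin_sphere_Some:
  assumes "openin (cube_top n) O1" "O1 \<subseteq> intr n"
  shows "openin (sphere n) (Some ` O1)"
  unfolding openin_sphere
proof
  show "Some ` O1 \<subseteq> insert None (cube_q n ` topspace (cube_top n))"
    using assms(2) cube_q_image by blast
  have "{u \<in> topspace (cube_top n). cube_q n u \<in> Some ` O1} = O1"
  proof (intro equalityI subsetI)
    fix x assume "x \<in> {u \<in> topspace (cube_top n). cube_q n u \<in> Some ` O1}"
    then have x: "x \<in> topspace (cube_top n)" "cube_q n x \<in> Some ` O1" by auto
    then show "x \<in> O1" using cube_q_eq[OF x(1)] by (auto split: if_splits)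
  next
    fix x assume "x \<in> O1"
    then have "x \<in> intr n" "x \<in> topspace (cube_top n)" using assms(2) intr_sub by auto
    then show "x \<in> {u \<in> topspace (cube_top n). cube_q n u \<in> Some ` O1}"
      using cube_q_eq[of x n] \<open>x \<in> O1\<close> by auto
  qed
  then show "openin (cube_top n) {u \<in> topspace (cube_top n). cube_q n u \<in> Some ` O1}"
    using assms(1) by simp
qed

lemma openin_sphere_None:
  assumes "openin (cube_top n) O1" "topspace (cube_top n) - intr n \<subseteq> O1"
  shows "openin (sphere n) (insert None (Some ` (O1 \<inter> intr n)))"
  unfolding openin_sphere
proof
  show "insert None (Some ` (O1 \<inter> intr n)) \<subseteq> insert None (cube_q n ` topspace (cube_top n))"
    using cube_q_image by blast
  have "{u \<in> topspace (cube_top n). cube_q n u \<in> insert None (Some ` (O1 \<inter> intr n))} = O1"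
  proof -
    have "O1 \<subseteq> topspace (cube_top n)" using assms(1) by (rule openin_subset)
    then show ?thesis using assms(2) cube_q_eq[of _ n] by (auto split: if_splits)
  qed
  then show "openin (cube_top n) {u \<in> topspace (cube_top n). cube_q n u \<in> insert None (Some ` (O1 \<inter> intr n))}"
    using assms(1) by simp
qed

lemma openin_cube_box:
  assumes "\<And>i. i < n \<Longrightarrow> open (S i)"
  shows "openin (cube_top n) {v \<in> topspace (cube_top n). \<forall>i<n. v i \<in> S i}"
proof -
  have eq: "{v \<in> topspace (cube_top n). \<forall>i<n. v i \<in> S i} = PiE {..<n} (\<lambda>i. {0..1} \<inter> S i)"
    by (auto simp add: topspace_cube PiE_def Pi_def)
  have "openin (product_topology (\<lambda>_. unitI) {..<n}) (PiE {..<n} (\<lambda>i. {0..1} \<inter> S i))"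
    by (subst openin_PiE_gen) (use assms in \<open>auto intro!: openin_open_Int\<close>)
  then show ?thesis unfolding eq by (simp add: cube_top_def)
qed

lemma openin_cube_proj:
  assumes "j < n" "open T"
  shows "openin (cube_top n) {v \<in> topspace (cube_top n). v j \<in> T}"
proof -
  have "{v \<in> topspace (cube_top n). v j \<in> T} = {v \<in> topspace (cube_top n). \<forall>i<n. v i \<in> (if i = j then T else UNIV)}"
    using assms by auto
  then show ?thesis using assms by (simp add: openin_cube_box)
qed

lemma openin_intr: "openin (cube_top n) (intr n)"
proof -
  have "intr n = {v \<in> topspace (cube_top n). \<forall>i<n. v i \<in> {0<..<1}}"
    by (auto simp: intr_def)
  then show ?thesis using openin_cube_box[of n "\<lambda>_. {0<..<1}"] by simp
qed

lemma sphere_sep_None: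
  assumes u: "u \<in> intr n"
  shows "\<exists>U V. openin (sphere n) U \<and> openin (sphere n) V \<and> Some u \<in> U \<and> None \<in> V \<and> disjnt U V"
proof (cases "n = 0")
  case True
  have "topspace (cube_top n) - intr n \<subseteq> {}" using True by (auto simp: intr_def)
  then have "openin (sphere n) (insert None (Some ` ({} \<inter> intr n)))"
    by (intro openin_sphere_None) auto
  moreover have "openin (sphere n) (Some ` intr n)"
    by (rule openin_sphere_Some[OF openin_intr subset_refl])
  ultimately show ?thesis using u by (force simp: disjnt_def)
next
  case False
  define \<delta> where "\<delta> = Min ((\<lambda>j. min (u j) (1 - u j)) ` {..<n}) / 2"
  have pos: "\<delta> > 0"
  proof -
    have "0 < Min ((\<lambda>j. min (u j) (1 - u j)) ` {..<n})"
      using u False by (subst Min_gr_iff) (auto simp: intr_def)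
    then show ?thesis by (simp add: \<delta>_def)
  qed
  have le: "2 * \<delta> \<le> u j \<and> 2 * \<delta> \<le> 1 - u j" if "j < n" for j
  proof -
    have "Min ((\<lambda>j. min (u j) (1 - u j)) ` {..<n}) \<le> min (u j) (1 - u j)"
      using that by (intro Min_le) auto
    then show ?thesis by (simp add: \<delta>_def)
  qed
  define B1 where "B1 = {v \<in> topspace (cube_top n). \<forall>j<n. v j \<in> {u j - \<delta><..<u j + \<delta>}}"
  define B2 where "B2 = (\<Union>j\<in>{..<n}. {v \<in> topspace (cube_top n). v j \<in> {..<\<delta>} \<union> {1 - \<delta><..}})"
  have oB1: "openin (cube_top n) B1" unfolding B1_def by (rule openin_cube_box) auto
  have oj: "openin (cube_top n) {v \<in> topspace (cube_top n). v j \<in> {..<\<delta>} \<union> {1 - \<delta><..}}" if "j < n" for j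
    by (rule openin_cube_proj[OF that]) auto
  have oB2: "openin (cube_top n) B2" unfolding B2_def
    by (intro openin_Union) (use oj in blast)
  have B1i: "B1 \<subseteq> intr n"
  proof
    fix v assume "v \<in> B1"
    then have "v \<in> topspace (cube_top n)" "\<forall>j<n. u j - \<delta> < v j \<and> v j < u j + \<delta>" by (auto simp: B1_def)
    then show "v \<in> intr n" using le pos unfolding intr_def by force
  qed
  have bd: "topspace (cube_top n) - intr n \<subseteq> B2"
  proof
    fix v assume v: "v \<in> topspace (cube_top n) - intr n"
    then obtain j where "j < n" "\<not> (0 < v j \<and> v j < 1)" by (auto simp: intr_def)
    moreover have "0 \<le> v j \<and> v j \<le> 1" using v \<open>j < n\<close> by (auto simp: topspace_cube PiE_iff)
    ultimately have "v j < \<delta> \<or> v j > 1 - \<delta>" using pos by auto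
    then show "v \<in> B2" using v \<open>j < n\<close> by (auto simp: B2_def)
  qed
  have disj: "B1 \<inter> B2 = {}"
  proof (rule ccontr)
    assume "B1 \<inter> B2 \<noteq> {}"
    then obtain v j where "v \<in> B1" "j < n" "v j < \<delta> \<or> v j > 1 - \<delta>" by (auto simp: B2_def)
    moreover have "u j - \<delta> < v j \<and> v j < u j + \<delta>" using \<open>v \<in> B1\<close> \<open>j < n\<close> by (auto simp: B1_def)
    ultimately show False using le[OF \<open>j < n\<close>] by auto
  qed
  have uB1: "u \<in> B1" using u pos intr_sub by (auto simp: B1_def)
  show ?thesis
  proof (intro exI conjI)
    show "openin (sphere n) (Some ` B1)" by (rule openin_sphere_Some[OF oB1 B1i])
    show "openin (sphere n) (insert None (Some ` (B2 \<inter> intr n)))" by (rule openin_sphere_None[OF oB2 bd])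
    show "Some u \<in> Some ` B1" using uB1 by blast
    show "None \<in> insert None (Some ` (B2 \<inter> intr n))" by simp
    show "disjnt (Some ` B1) (insert None (Some ` (B2 \<inter> intr n)))"
      using disj by (auto simp: disjnt_def)
  qed
qed

lemma sphere_sep_Some:
  assumes u: "u \<in> intr n" and w: "w \<in> intr n" and uw: "u \<noteq> w"
  shows "\<exists>U V. openin (sphere n) U \<and> openin (sphere n) V \<and> Some u \<in> U \<and> Some w \<in> V \<and> disjnt U V"
proof -
  have "u \<in> PiE {..<n} (\<lambda>_. {0..1})" "w \<in> PiE {..<n} (\<lambda>_. {0..1})"
    using u w intr_sub topspace_cube by blast+
  then obtain j where j: "j < n" "u j \<noteq> w j" using uw
    by (metis PiE_ext lessThan_iff)
  define m where "m = (u j + w j) / 2"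
  define T1 where "T1 = (if u j < w j then {..<m} else {m<..})"
  define T2 where "T2 = (if u j < w j then {m<..} else {..<m})"
  have oT: "open T1" "open T2" by (auto simp: T1_def T2_def)
  have dT: "T1 \<inter> T2 = {}" by (auto simp: T1_def T2_def)
  have mem: "u j \<in> T1" "w j \<in> T2" using j by (auto simp: T1_def T2_def m_def)
  define O1 where "O1 = intr n \<inter> {v \<in> topspace (cube_top n). v j \<in> T1}"
  define O2 where "O2 = intr n \<inter> {v \<in> topspace (cube_top n). v j \<in> T2}"
  have o: "openin (cube_top n) O1" "openin (cube_top n) O2"
    unfolding O1_def O2_def using openin_intr openin_cube_proj[OF j(1)] oT by (auto intro!: openin_Int)
  show ?thesis
  proof (intro exI conjI)
    show "openin (sphere n) (Some ` O1)" by (rule openin_sphere_Some[OF o(1)]) (auto simp: O1_def)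
    show "openin (sphere n) (Some ` O2)" by (rule openin_sphere_Some[OF o(2)]) (auto simp: O2_def)
    show "Some u \<in> Some ` O1" using u mem intr_sub by (auto simp: O1_def)
    show "Some w \<in> Some ` O2" using w mem intr_sub by (auto simp: O2_def)
    show "disjnt (Some ` O1) (Some ` O2)" using dT by (auto simp: disjnt_def O1_def O2_def)
  qed
qed

lemma Hausdorff_sphere: "Hausdorff_space (sphere n)"
  unfolding Hausdorff_space_def
proof (intro allI impI, elim conjE)
  fix x y assume x: "x \<in> topspace (sphere n)" and y: "y \<in> topspace (sphere n)" and xy: "x \<noteq> y"
  show "\<exists>U V. openin (sphere n) U \<and> openin (sphere n) V \<and> x \<in> U \<and> y \<in> V \<and> disjnt U V"
  proof (cases x)
    case None
    then obtain w where w: "y = Some w" "w \<in> intr n" using y xy by (auto simp: topspace_sphere)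
    then show ?thesis using sphere_sep_None[OF w(2)] None by (metis disjnt_sym)
  next
    case (Some u)
    then have u: "u \<in> intr n" using x by (auto simp: topspace_sphere)
    show ?thesis
    proof (cases y)
      case None
      then show ?thesis using sphere_sep_None[OF u] Some by metis
    next
      case (Some w)
      then have "w \<in> intr n" using y by (auto simp: topspace_sphere)
      then show ?thesis using sphere_sep_Some[OF u] Some \<open>x = Some u\<close> xy by blast
    qed
  qed
qed

lemma compact_cube: "compact_space (cube_top n)"
  unfolding cube_top_def
  by (simp add: compact_space_product_topology compact_space_subtopology compactin_euclidean_iff)

lemma compact_sphere: "compact_space (sphere n)"
proof -
  have "compactin (sphere n) (cube_q n ` topspace (cube_top n))"
    by (rule image_compactin[OF _ continuous_map_cube_q]) (use compact_cube compact_space_def in blast)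
  moreover have "compactin (sphere n) {None}" by (rule finite_imp_compactin) auto
  ultimately have "compactin (sphere n) (cube_q n ` topspace (cube_top n) \<union> {None})"
    by (rule compactin_Un)
  moreover have "cube_q n ` topspace (cube_top n) \<union> {None} = topspace (sphere n)"
    using cube_q_image topspace_sphere by auto
  ultimately show ?thesis by (simp add: compact_space_def)
qed


lemma unitI_lc: "locally_compact_space unitI"
  by (simp add: compact_imp_locally_compact_space compact_space_subtopology compactin_euclidean_iff)

lemma unitI_H: "Hausdorff_space unitI"
  by (simp add: Hausdorff_space_subtopology)

lemma cube_nonempty: "(\<lambda>i. if i < n then 0 else undefined) \<in> topspace (cube_top n)"
  by (simp add: topspace_cube PiE_iff extensional_def)

lemma quotient_sphere:
  "quotient_map (sum_topology (\<lambda>_::bool. cube_top n) UNIV) (sphere n) (\<lambda>(b,u). if b then cube_q n u else None)"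
  unfolding quotient_map_def
proof (intro conjI allI impI)
  show "(\<lambda>(b,u). if b then cube_q n u else None) ` topspace (sum_topology (\<lambda>_::bool. cube_top n) UNIV) = topspace (sphere n)"
  proof -
    have "(\<lambda>(b,u). if b then cube_q n u else None) ` topspace (sum_topology (\<lambda>_::bool. cube_top n) UNIV)
          = insert None (cube_q n ` topspace (cube_top n))"
    proof (intro equalityI subsetI)
      fix y assume "y \<in> (\<lambda>(b,u). if b then cube_q n u else None) ` topspace (sum_topology (\<lambda>_::bool. cube_top n) UNIV)"
      then show "y \<in> insert None (cube_q n ` topspace (cube_top n))" by auto
    next
      fix y assume "y \<in> insert None (cube_q n ` topspace (cube_top n))"
      then consider "y = None" | u where "u \<in> topspace (cube_top n)" "y = cube_q n u" by blast
      then show "y \<in> (\<lambda>(b,u). if b then cube_q n u else None) ` topspace (sum_topology (\<lambda>_::bool. cube_top n) UNIV)"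
      proof cases
        case 1
        then show ?thesis using cube_nonempty[of n]
          by (intro image_eqI[of _ _ "(False, (\<lambda>i. if i < n then 0 else undefined))"]) auto
      next
        case 2
        then show ?thesis by (intro image_eqI[of _ _ "(True, u)"]) auto
      qed
    qed
    then show ?thesis using cube_q_image[of n] topspace_sphere[of n] by simp
  qed
next
  fix U assume U: "U \<subseteq> topspace (sphere n)"
  let ?Q = "\<lambda>(b,u). if b then cube_q n u else None"
  have T: "{x. (True, x) \<in> {x \<in> topspace (sum_topology (\<lambda>_::bool. cube_top n) UNIV). ?Q x \<in> U}}
           = {u \<in> topspace (cube_top n). cube_q n u \<in> U}" by auto
  have F: "{x. (False, x) \<in> {x \<in> topspace (sum_topology (\<lambda>_::bool. cube_top n) UNIV). ?Q x \<in> U}}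
           = (if None \<in> U then topspace (cube_top n) else {})" by auto
  have "openin (sum_topology (\<lambda>_::bool. cube_top n) UNIV) {x \<in> topspace (sum_topology (\<lambda>_::bool. cube_top n) UNIV). ?Q x \<in> U}
        \<longleftrightarrow> openin (cube_top n) {u \<in> topspace (cube_top n). cube_q n u \<in> U}"
  proof -
    have "openin (sum_topology (\<lambda>_::bool. cube_top n) UNIV) {x \<in> topspace (sum_topology (\<lambda>_::bool. cube_top n) UNIV). ?Q x \<in> U}
        \<longleftrightarrow> (\<forall>b. openin (cube_top n) {x. (b, x) \<in> {x \<in> topspace (sum_topology (\<lambda>_::bool. cube_top n) UNIV). ?Q x \<in> U}})"
      by (subst openin_sum_topology) auto
    also have "\<dots> \<longleftrightarrow> openin (cube_top n) {x. (True, x) \<in> {x \<in> topspace (sum_topology (\<lambda>_::bool. cube_top n) UNIV). ?Q x \<in> U}}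
         \<and> openin (cube_top n) {x. (False, x) \<in> {x \<in> topspace (sum_topology (\<lambda>_::bool. cube_top n) UNIV). ?Q x \<in> U}}"
      by (simp only: all_bool_eq)
    also have "\<dots> \<longleftrightarrow> openin (cube_top n) {u \<in> topspace (cube_top n). cube_q n u \<in> U}"
      unfolding T F by simp
    finally show ?thesis .
  qed
  also have "\<dots> \<longleftrightarrow> openin (sphere n) U"
    using U unfolding openin_sphere topspace_sphere cube_q_image by simp
  finally show "openin (sum_topology (\<lambda>_::bool. cube_top n) UNIV) {x \<in> topspace (sum_topology (\<lambda>_::bool. cube_top n) UNIV). ?Q x \<in> U} = openin (sphere n) U" .
qed

lemma susp_cube:
  assumes u: "u \<in> topspace (cube_top n)" and s: "s \<in> {0..1}"
  shows "susp_pt n (cube_q n u) s = cube_q (Suc n) (u(n:=s))"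
proof (cases "\<exists>i<n. u i = 0 \<or> u i = 1")
  case True
  then obtain i where "i < n" "u i = 0 \<or> u i = 1" by blast
  then have "\<exists>i<Suc n. (u(n:=s)) i = 0 \<or> (u(n:=s)) i = 1" by (intro exI[of _ i]) auto
  then show ?thesis using True by (simp add: cube_q_def susp_pt_def)
next
  case False
  have eq: "(\<exists>i<Suc n. (u(n:=s)) i = 0 \<or> (u(n:=s)) i = 1) \<longleftrightarrow> (s \<le> 0 \<or> 1 \<le> s)"
  proof
    assume "\<exists>i<Suc n. (u(n:=s)) i = 0 \<or> (u(n:=s)) i = 1"
    then obtain i where "i < Suc n" "(u(n:=s)) i = 0 \<or> (u(n:=s)) i = 1" by blast
    then show "s \<le> 0 \<or> 1 \<le> s" using False by (cases "i = n") auto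
  next
    assume "s \<le> 0 \<or> 1 \<le> s"
    then have "s = 0 \<or> s = 1" using s by auto
    then show "\<exists>i<Suc n. (u(n:=s)) i = 0 \<or> (u(n:=s)) i = 1" by (intro exI[of _ n]) auto
  qed
  have l: "cube_q n u = Some u" using False by (simp add: cube_q_def)
  have r: "cube_q (Suc n) (u(n:=s)) = (if s \<le> 0 \<or> 1 \<le> s then None else Some (u(n:=s)))"
    by (simp only: cube_q_def eq)
  show ?thesis unfolding l r by (simp add: susp_pt_def)
qed

lemma cont_upd: "continuous_map (prod_topology unitI (cube_top n)) (cube_top (Suc n)) (\<lambda>(s,u). u(n:=s))"
  unfolding cube_top_def continuous_map_componentwise
proof (intro conjI ballI)
  show "(\<lambda>(s,u). u(n:=s)) ` topspace (prod_topology unitI (PT unitI n)) \<subseteq> extensional {..<Suc n}"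
    by (auto simp: extensional_def PiE_iff)
  fix k assume "k \<in> {..<Suc n}"
  show "continuous_map (prod_topology unitI (PT unitI n)) unitI (\<lambda>x. (case x of (s,u) \<Rightarrow> u(n:=s)) k)"
  proof (cases "k = n")
    case True
    then show ?thesis by (simp add: case_prod_unfold continuous_map_fst)
  next
    case False
    then have "k < n" using \<open>k \<in> {..<Suc n}\<close> by auto
    have "continuous_map (prod_topology unitI (PT unitI n)) unitI ((\<lambda>u. u k) \<circ> snd)"
      by (rule continuous_map_compose[OF continuous_map_snd]) (use \<open>k < n\<close> in \<open>auto intro: continuous_map_product_projection\<close>)
    then show ?thesis using False by (simp add: case_prod_unfold o_def)
  qed
qed

lemma cont_susp: "continuous_map (prod_topology unitI (sphere n)) (sphere (Suc n)) (\<lambda>(s,y). susp_pt n y s)"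
proof (rule continuous_map_quotient_sum_prod[OF unitI_lc unitI_H quotient_sphere])
  fix b :: bool
  show "continuous_map (prod_topology unitI (cube_top n)) (sphere (Suc n))
          (\<lambda>(z, x). (case (z, (\<lambda>(b, u). if b then cube_q n u else None) (b, x)) of (s, y) \<Rightarrow> susp_pt n y s))"
  proof (cases b)
    case True
    have "continuous_map (prod_topology unitI (cube_top n)) (sphere (Suc n)) (cube_q (Suc n) \<circ> (\<lambda>(s,u). u(n:=s)))"
      by (rule continuous_map_compose[OF cont_upd continuous_map_cube_q])
    then show ?thesis
      by (rule continuous_map_eq) (use True susp_cube in auto)
  next
    case False
    have "continuous_map (prod_topology unitI (cube_top n)) (sphere (Suc n)) (\<lambda>_. None)"
      by (simp add: continuous_map_const)
    then show ?thesis
      by (rule continuous_map_eq) (use False in \<open>auto simp: susp_pt_def\<close>)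
  qed
qed

lemma sp_word_cong:
  assumes "\<And>i. i < n \<Longrightarrow> u i = v i"
  shows "sp_word e n u = sp_word e n v"
proof -
  have "map u [0..<n] = map v [0..<n]" by (rule map_cong) (auto simp: assms)
  then show ?thesis by (simp only: sp_word_def)
qed

lemma susp_pt_None [simp]: "susp_pt n None s = None"
  by (simp add: susp_pt_def)

lemma cont_SPsusp:
  "continuous_map (prod_topology unitI (SPS n)) (SPS (Suc n)) (\<lambda>(s,M). SPmap None (\<lambda>y. susp_pt n y s) M)"
proof (rule continuous_map_from_SP_prod[OF unitI_lc unitI_H None_in_sphere])
  fix m :: nat assume "m \<ge> 1"
  define V where "V = (\<lambda>(s::real, u::nat \<Rightarrow> (nat \<Rightarrow> real) option). (\<lambda>i. if i < m then susp_pt n (u i) s else undefined))"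
  have cV: "continuous_map (prod_topology unitI (PT (sphere n) m)) (PT (sphere (Suc n)) m) V"
    unfolding continuous_map_componentwise
  proof (intro conjI ballI)
    show "V ` topspace (prod_topology unitI (PT (sphere n) m)) \<subseteq> extensional {..<m}"
      by (auto simp: V_def extensional_def)
    fix k assume k: "k \<in> {..<m}"
    have "continuous_map (prod_topology unitI (PT (sphere n) m)) (prod_topology unitI (sphere n)) (\<lambda>(s,u). (s, u k))"
      using k by (auto simp: case_prod_unfold intro!: continuous_map_pairedI continuous_map_fst
          continuous_map_compose[OF continuous_map_snd continuous_map_product_projection, unfolded o_def])
    then have "continuous_map (prod_topology unitI (PT (sphere n) m)) (sphere (Suc n)) ((\<lambda>(s,y). susp_pt n y s) \<circ> (\<lambda>(s,u). (s, u k)))"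
      by (rule continuous_map_compose[OF _ cont_susp])
    then show "continuous_map (prod_topology unitI (PT (sphere n) m)) (sphere (Suc n)) (\<lambda>x. V x k)"
      using k by (simp add: V_def case_prod_unfold o_def)
  qed
  have "continuous_map (prod_topology unitI (PT (sphere n) m)) (SPS (Suc n)) (sp_word None m \<circ> V)"
    by (rule continuous_map_compose[OF cV continuous_map_sp_word])
  then show "continuous_map (prod_topology unitI (PT (sphere n) m)) (SPS (Suc n))
     (\<lambda>(z, u). (case (z, sp_word None m u) of (s, M) \<Rightarrow> SPmap None (\<lambda>y. susp_pt n y s) M))"
  proof (rule continuous_map_eq)
    fix x assume "x \<in> topspace (prod_topology unitI (PT (sphere n) m))"
    obtain s u where x: "x = (s,u)" by fastforce
    have "SPmap None (\<lambda>y. susp_pt n y s) (sp_word None m u) = sp_word None m ((\<lambda>y. susp_pt n y s) \<circ> u)"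
      by (rule SPmap_sp_word) simp
    also have "\<dots> = sp_word None m (V (s,u))"
      by (rule sp_word_cong) (simp add: V_def)
    finally show "(sp_word None m \<circ> V) x = (\<lambda>(z, u). (case (z, sp_word None m u) of (s, M) \<Rightarrow> SPmap None (\<lambda>y. susp_pt n y s) M)) x"
      by (simp add: x)
  qed
qed


lemma mset_eq_from_filter:
  assumes "filter_mset (\<lambda>x. x \<noteq> e) A = filter_mset (\<lambda>x. x \<noteq> e) B" "size A = size B"
  shows "A = B"
proof -
  have fr: "C = filter_mset (\<lambda>x. x \<noteq> e) C + replicate_mset (count C e) e" for C
  proof -
    have "C = {#x \<in># C. x \<noteq> e#} + {#x \<in># C. \<not> x \<noteq> e#}" by (rule multiset_partition)
    moreover have "{#x \<in># C. \<not> x \<noteq> e#} = replicate_mset (count C e) e"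
      by (simp add: filter_eq_replicate_mset)
    ultimately show ?thesis by metis
  qed
  have A: "A = filter_mset (\<lambda>x. x \<noteq> e) A + replicate_mset (count A e) e" by (rule fr)
  have B: "B = filter_mset (\<lambda>x. x \<noteq> e) B + replicate_mset (count B e) e" by (rule fr)
  have "size A = size (filter_mset (\<lambda>x. x \<noteq> e) A) + count A e"
    using arg_cong[OF A, of size] by simp
  moreover have "size B = size (filter_mset (\<lambda>x. x \<noteq> e) B) + count B e"
    using arg_cong[OF B, of size] by simp
  ultimately have "count A e = count B e" using assms by simp
  then show ?thesis using A B assms(1) by metis
qed

lemma sp_word_eq_perm:
  assumes "sp_word e N u = sp_word e N v"
  shows "\<exists>p. p permutes {..<N} \<and> (\<forall>i<N. v i = u (p i))"
proof -
  have "mset (map u [0..<N]) = mset (map v [0..<N])"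
    by (rule mset_eq_from_filter[of e]) (use assms in \<open>auto simp: sp_word_def\<close>)
  then obtain p where p: "p permutes {..<length (map u [0..<N])}" "permute_list p (map u [0..<N]) = map v [0..<N]"
    by (metis mset_eq_permutation)
  have "\<forall>i<N. v i = u (p i)"
  proof (intro allI impI)
    fix i assume i: "i < N"
    have "map v [0..<N] ! i = permute_list p (map u [0..<N]) ! i" using p(2) by simp
    also have "\<dots> = map u [0..<N] ! p i" using i p(1) by (simp add: permute_list_nth)
    also have "\<dots> = u (p i)" using permutes_in_image[OF p(1)] i by simp
    finally show "v i = u (p i)" using i by simp
  qed
  then show ?thesis using p(1) by auto
qed

lemma sp_word_perm:
  assumes "p permutes {..<N}"
  shows "sp_word e N (\<lambda>i. f (p i)) = sp_word e N f"
proof -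
  have "map (\<lambda>i. f (p i)) [0..<N] = permute_list p (map f [0..<N])"
    using permutes_in_image[OF assms] assms by (intro nth_equalityI) (auto simp: permute_list_nth)
  then have "mset (map (\<lambda>i. f (p i)) [0..<N]) = mset (map f [0..<N])"
    using assms by (simp add: mset_permute_list)
  then show ?thesis by (simp add: sp_word_def)
qed

lemma sp_word_pad:
  assumes "m \<le> N"
  shows "sp_word e N (\<lambda>i. if i < m then v i else e) = sp_word e m v"
  using assms
proof (induct N)
  case 0 then show ?case by simp
next
  case (Suc N)
  show ?case
  proof (cases "m = Suc N")
    case True
    have "sp_word e (Suc N) (\<lambda>i. if i < m then v i else e) = sp_word e (Suc N) v"
      by (rule sp_word_cong) (use True in auto)
    then show ?thesis using True by simp
  next
    case False
    then have "m \<le> N" using Suc by auto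
    then show ?thesis using Suc by (simp add: sp_word_Suc)
  qed
qed

lemma sp_word_cat:
  "sp_word e (a + b) (\<lambda>i. if i < a then u i else v (i - a)) = sp_word e a u + sp_word e b v"
proof (induct b)
  case 0
  then show ?case by (simp, intro sp_word_cong) auto
next
  case (Suc b)
  then show ?case by (simp add: sp_word_Suc add.assoc)
qed

section \<open>Closed images\<close>

lemma closedin_SP:
  "closedin (SP X e) T \<longleftrightarrow> T \<subseteq> sp_carrier X e \<and>
      (\<forall>n\<ge>1. closedin (PT X n) {u \<in> topspace (PT X n). sp_word e n u \<in> T})"
proof -
  have eq: "{u \<in> topspace (PT X n). sp_word e n u \<in> sp_carrier X e - T} =
        topspace (PT X n) - {u \<in> topspace (PT X n). sp_word e n u \<in> T}" for n
    using sp_word_carrier by fastforce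
  show ?thesis
    unfolding closedin_def openin_SP topspace_SP eq by auto
qed

definition reidx :: "'a \<Rightarrow> nat \<Rightarrow> (nat \<Rightarrow> nat option) \<Rightarrow> (nat \<Rightarrow> 'a) \<Rightarrow> (nat \<Rightarrow> 'a)" where
  "reidx e L \<rho> v = (\<lambda>i. if i < L then (case \<rho> i of Some j \<Rightarrow> v j | None \<Rightarrow> e) else undefined)"

lemma continuous_map_reidx:
  assumes e: "e \<in> topspace X" and \<rho>: "\<And>i j. i < L \<Longrightarrow> \<rho> i = Some j \<Longrightarrow> j < m"
  shows "continuous_map (PT X m) (PT X L) (reidx e L \<rho>)"
  unfolding continuous_map_componentwise
proof (intro conjI ballI)
  show "reidx e L \<rho> ` topspace (PT X m) \<subseteq> extensional {..<L}"
    by (auto simp: reidx_def extensional_def)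
  fix k assume k: "k \<in> {..<L}"
  show "continuous_map (PT X m) X (\<lambda>x. reidx e L \<rho> x k)"
  proof (cases "\<rho> k")
    case None
    then show ?thesis using k e by (simp add: reidx_def continuous_map_const)
  next
    case (Some j)
    then have "j < m" using \<rho> k by auto
    have "continuous_map (PT X m) X (\<lambda>x. x j)"
      using continuous_map_product_projection[of j "{..<m}" "\<lambda>_. X"] \<open>j < m\<close> by simp
    then show ?thesis using k Some by (simp add: reidx_def)
  qed
qed

context
  fixes X :: "'a topology" and e :: 'a
  assumes XH: "Hausdorff_space X" and Xc: "compact_space X" and e: "e \<in> topspace X"
begin

lemma PT_Hausdorff: "Hausdorff_space (PT X n)"
  using XH by (simp add: Hausdorff_space_product_topology)

lemma PT_compact: "compact_space (PT X n)"
  using Xc by (simp add: compact_space_product_topology)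

lemma closedin_sp_word_image:
  assumes C: "closedin (PT X k) C"
  shows "closedin (SP X e) (sp_word e k ` C)"
  unfolding closedin_SP
proof (intro conjI allI impI)
  have Csub: "C \<subseteq> topspace (PT X k)" using C by (rule closedin_subset)
  show "sp_word e k ` C \<subseteq> sp_carrier X e"
  proof (rule image_subsetI)
    fix u assume "u \<in> C" then show "sp_word e k u \<in> sp_carrier X e" using Csub by (intro sp_word_carrier) blast
  qed
  fix m :: nat assume "m \<ge> 1"
  define N where "N = m + k"
  define P where "P = {p. p permutes {..<N}}"
  define \<rho> :: "(nat \<Rightarrow> nat) \<Rightarrow> nat \<Rightarrow> nat option" where "\<rho> = (\<lambda>p i. if p i < m then Some (p i) else None)"
  define \<rho>' :: "(nat \<Rightarrow> nat) \<Rightarrow> nat \<Rightarrow> nat option" where "\<rho>' = (\<lambda>p i. if i < k then None else \<rho> p i)"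
  define D where "D = (\<lambda>p. {v \<in> topspace (PT X m). reidx e k (\<rho> p) v \<in> C} \<inter>
                            {v \<in> topspace (PT X m). reidx e N (\<rho>' p) v = reidx e N (\<lambda>_. None) v})"
  have fP: "finite P" unfolding P_def by (simp add: finite_permutations)
  have cD: "closedin (PT X m) (D p)" if "p \<in> P" for p
  proof -
    have pin: "\<And>i. i < N \<Longrightarrow> p i < N" using that permutes_in_image[of p "{..<N}"] by (auto simp: P_def)
    have c1: "continuous_map (PT X m) (PT X k) (reidx e k (\<rho> p))"
      by (rule continuous_map_reidx[OF e]) (auto simp: \<rho>_def split: if_splits)
    have c2: "continuous_map (PT X m) (PT X N) (reidx e N (\<rho>' p))"
      by (rule continuous_map_reidx[OF e]) (auto simp: \<rho>'_def \<rho>_def split: if_splits)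
    have c3: "continuous_map (PT X m) (PT X N) (reidx e N (\<lambda>_. None))"
      by (rule continuous_map_reidx[OF e]) auto
    show ?thesis unfolding D_def
      by (intro closedin_Int closedin_continuous_map_preimage[OF c1 C] closedin_continuous_maps_eq[OF PT_Hausdorff c2 c3])
  qed
  have eq: "{v \<in> topspace (PT X m). sp_word e m v \<in> sp_word e k ` C} = \<Union>(D ` P)"
  proof (intro equalityI subsetI)
    fix v assume "v \<in> {v \<in> topspace (PT X m). sp_word e m v \<in> sp_word e k ` C}"
    then obtain u where v: "v \<in> topspace (PT X m)" and u: "u \<in> C" and vu: "sp_word e m v = sp_word e k u"
      by auto
    define f where "f = (\<lambda>i. if i < m then v i else e)"
    define g where "g = (\<lambda>i. if i < k then u i else e)"
    have "sp_word e N f = sp_word e N g"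
      using vu sp_word_pad[of m N e v] sp_word_pad[of k N e u] by (simp add: N_def f_def g_def)
    then obtain p where p: "p permutes {..<N}" "\<forall>i<N. g i = f (p i)"
      using sp_word_eq_perm by metis
    have pin: "\<And>i. i < N \<Longrightarrow> p i < N" using p(1) permutes_in_image[of p "{..<N}"] by auto
    have fp: "\<And>i. i < N \<Longrightarrow> (case \<rho> p i of Some j \<Rightarrow> v j | None \<Rightarrow> e) = f (p i)"
      by (auto simp: \<rho>_def f_def)
    have uext: "u \<in> extensional {..<k}" using u Csub by (auto simp: PiE_iff)
    have r1: "reidx e k (\<rho> p) v = u"
    proof
      fix i show "reidx e k (\<rho> p) v i = u i"
      proof (cases "i < k")
        case True
        then have "i < N" by (simp add: N_def)
        then show ?thesis using True fp[OF \<open>i < N\<close>] p(2)[rule_format, OF \<open>i < N\<close>] by (simp add: reidx_def g_def)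
      next
        case False
        then show ?thesis using uext by (simp add: reidx_def extensional_def)
      qed
    qed
    have r2: "reidx e N (\<rho>' p) v = reidx e N (\<lambda>_. None) v"
    proof
      fix i show "reidx e N (\<rho>' p) v i = reidx e N (\<lambda>_. None) v i"
      proof (cases "i < N \<and> \<not> i < k")
        case True
        then have "(case \<rho> p i of Some j \<Rightarrow> v j | None \<Rightarrow> e) = e"
          using fp[of i] p(2) by (auto simp: g_def)
        then show ?thesis using True by (simp add: reidx_def \<rho>'_def)
      next
        case False
        then show ?thesis by (auto simp: reidx_def \<rho>'_def)
      qed
    qed
    show "v \<in> \<Union>(D ` P)"
      using v u r1 r2 p(1) by (auto simp: D_def P_def)
  next
    fix v assume "v \<in> \<Union>(D ` P)"
    then obtain p where p: "p permutes {..<N}" and v: "v \<in> topspace (PT X m)"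
        and r1: "reidx e k (\<rho> p) v \<in> C" and r2: "reidx e N (\<rho>' p) v = reidx e N (\<lambda>_. None) v"
      by (auto simp: D_def P_def)
    define u where "u = reidx e k (\<rho> p) v"
    define f where "f = (\<lambda>i. if i < m then v i else e)"
    define g where "g = (\<lambda>i. if i < k then u i else e)"
    have fp: "\<And>i. (case \<rho> p i of Some j \<Rightarrow> v j | None \<Rightarrow> e) = f (p i)"
      by (auto simp: \<rho>_def f_def)
    have gf: "g i = f (p i)" if "i < N" for i
    proof (cases "i < k")
      case True
      then show ?thesis using fp by (simp add: g_def u_def reidx_def)
    next
      case False
      have "reidx e N (\<rho>' p) v i = reidx e N (\<lambda>_. None) v i" using r2 by simp
      then have "(case \<rho> p i of Some j \<Rightarrow> v j | None \<Rightarrow> e) = e"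
        using False that by (simp add: reidx_def \<rho>'_def)
      then show ?thesis using False fp by (simp add: g_def)
    qed
    have "sp_word e m v = sp_word e N f" using sp_word_pad[of m N e v] by (simp add: N_def f_def)
    also have "\<dots> = sp_word e N (\<lambda>i. f (p i))" using sp_word_perm[OF p, of e f] by simp
    also have "\<dots> = sp_word e N g" using gf by (intro sp_word_cong) auto
    also have "\<dots> = sp_word e k u" using sp_word_pad[of k N e u] by (simp add: N_def g_def)
    finally show "v \<in> {v \<in> topspace (PT X m). sp_word e m v \<in> sp_word e k ` C}"
      using v r1 by (auto simp: u_def)
  qed
  show "closedin (PT X m) {u \<in> topspace (PT X m). sp_word e m u \<in> sp_word e k ` C}"
    unfolding eq by (rule closedin_Union) (use fP cD in auto)
qed

end


definition stage :: "'a topology \<Rightarrow> 'a \<Rightarrow> nat \<Rightarrow> 'a multiset set" where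
  "stage X e k = sp_word e k ` topspace (PT X k)"

lemma stage_sub: "stage X e k \<subseteq> sp_carrier X e"
  unfolding stage_def by (rule image_subsetI) (rule sp_word_carrier)

lemma continuous_map_cat:
  "continuous_map (prod_topology (PT X k) (PT X k)) (PT X (k + k))
     (\<lambda>(u,v). (\<lambda>i. if i < k then u i else if i < k + k then v (i - k) else undefined))"
  unfolding continuous_map_componentwise
proof (intro conjI ballI)
  show "(\<lambda>(u,v). (\<lambda>i. if i < k then u i else if i < k + k then v (i - k) else undefined)) ` topspace (prod_topology (PT X k) (PT X k)) \<subseteq> extensional {..<k + k}"
    by (auto simp: extensional_def)
  fix i assume i: "i \<in> {..<k + k}"
  show "continuous_map (prod_topology (PT X k) (PT X k)) X
          (\<lambda>x. (case x of (u,v) \<Rightarrow> (\<lambda>i. if i < k then u i else if i < k + k then v (i - k) else undefined)) i)"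
  proof (cases "i < k")
    case True
    have "continuous_map (prod_topology (PT X k) (PT X k)) X ((\<lambda>u. u i) \<circ> fst)"
      by (rule continuous_map_compose[OF continuous_map_fst])
         (use continuous_map_product_projection[of i "{..<k}" "\<lambda>_. X"] True in simp)
    then show ?thesis using True by (simp add: case_prod_unfold o_def)
  next
    case False
    then have "i - k < k" using i by auto
    have "continuous_map (prod_topology (PT X k) (PT X k)) X ((\<lambda>u. u (i - k)) \<circ> snd)"
      by (rule continuous_map_compose[OF continuous_map_snd])
         (use continuous_map_product_projection[of "i - k" "{..<k}" "\<lambda>_. X"] \<open>i - k < k\<close> in simp)
    then show ?thesis using False i by (simp add: case_prod_unfold o_def)
  qed
qed

context
  fixes X :: "'a topology" and e :: 'a
  assumes XH: "Hausdorff_space X" and Xc: "compact_space X" and e: "e \<in> topspace X"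
begin

abbreviation "SS \<equiv> SP X e"
abbreviation "St k \<equiv> subtopology (SP X e) (stage X e k)"

lemma stage_closed: "closedin SS (stage X e k)"
  unfolding stage_def by (rule closedin_sp_word_image[OF XH Xc e closedin_topspace])

lemma stage_mono: assumes "k \<le> k'" shows "stage X e k \<subseteq> stage X e k'"
proof
  fix M assume "M \<in> stage X e k"
  then obtain u where u: "u \<in> topspace (PT X k)" "M = sp_word e k u" by (auto simp: stage_def)
  define v where "v = (\<lambda>i. if i < k then u i else if i < k' then e else undefined)"
  have "v \<in> topspace (PT X k')" using u e assms by (auto simp: v_def PiE_iff extensional_def)
  moreover have "sp_word e k' v = sp_word e k' (\<lambda>i. if i < k then u i else e)"
    by (rule sp_word_cong) (simp add: v_def)
  moreover have "sp_word e k' (\<lambda>i. if i < k then u i else e) = M"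
    using sp_word_pad[OF assms, of e u] u by simp
  ultimately show "M \<in> stage X e k'" unfolding stage_def by (metis image_eqI)
qed

lemma in_stage: "M \<in> sp_carrier X e \<Longrightarrow> M \<in> stage X e (size M)"
  using sp_word_surj[of M X e "size M"] e unfolding stage_def by (metis image_eqI order_refl)

lemma topspace_St: "topspace (St k) = stage X e k"
  using stage_sub[of X e k] by auto

lemma closedin_singleton_SP:
  assumes "M \<in> stage X e k"
  shows "closedin SS {M}"
proof -
  obtain u where u: "u \<in> topspace (PT X k)" "M = sp_word e k u" using assms by (auto simp: stage_def)
  have "t1_space (PT X k)" using PT_Hausdorff[OF XH Xc e] by (rule Hausdorff_imp_t1_space)
  then have "closedin (PT X k) {u}" using u by (simp add: t1_space_closedin_singleton)
  then have "closedin SS (sp_word e k ` {u})" by (rule closedin_sp_word_image[OF XH Xc e])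
  then show ?thesis using u by simp
qed

lemma perfect_stage: "perfect_map (PT X k) (St k) (sp_word e k)"
  unfolding perfect_map_def proper_map_def
proof (intro conjI ballI)
  show "continuous_map (PT X k) (St k) (sp_word e k)"
    by (rule continuous_map_into_subtopology[OF continuous_map_sp_word]) (auto simp: stage_def)
  show "closed_map (PT X k) (St k) (sp_word e k)"
    unfolding closed_map_def
  proof (intro allI impI)
    fix C assume C: "closedin (PT X k) C"
    have "sp_word e k ` C \<subseteq> stage X e k" using closedin_subset[OF C] by (auto simp: stage_def)
    then show "closedin (St k) (sp_word e k ` C)"
      by (intro closedin_subset_topspace closedin_sp_word_image[OF XH Xc e C])
  qed
  fix M assume "M \<in> topspace (St k)"
  then have M: "M \<in> stage X e k" using topspace_St by blast
  have "closedin (PT X k) {u \<in> topspace (PT X k). sp_word e k u \<in> {M}}"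
    by (rule closedin_continuous_map_preimage[OF continuous_map_sp_word closedin_singleton_SP[OF M]])
  then show "compactin (PT X k) {u \<in> topspace (PT X k). sp_word e k u = M}"
    using closedin_compact_space[OF PT_compact[OF XH Xc e]] by simp
next
  show "sp_word e k ` topspace (PT X k) = topspace (St k)"
    using topspace_St by (simp add: stage_def)
qed

lemma normal_St: "normal_space (St k)"
proof -
  have "normal_space (PT X k)"
    using compact_Hausdorff_or_regular_imp_normal_space PT_compact[OF XH Xc e] PT_Hausdorff[OF XH Xc e] by blast
  then show ?thesis using normal_space_perfect_map_image perfect_stage by blast
qed

lemma compact_St: "compact_space (St k)"
proof -
  have "compactin SS (stage X e k)"
    unfolding stage_def
    by (rule image_compactin[OF _ continuous_map_sp_word]) (use PT_compact[OF XH Xc e] compact_space_def in blast)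
  then show ?thesis by (rule compact_space_subtopology)
qed

lemma add_open_stage:
  assumes U: "openin SS U"
  shows "openin (prod_topology (St k) (St k)) {z \<in> stage X e k \<times> stage X e k. fst z + snd z \<in> U}"
proof -
  let ?P2 = "\<lambda>(u,v). (sp_word e k u, sp_word e k v)"
  have pm: "perfect_map (prod_topology (PT X k) (PT X k)) (prod_topology (St k) (St k)) ?P2"
    unfolding perfect_map_def
  proof (intro conjI)
    show "continuous_map (prod_topology (PT X k) (PT X k)) (prod_topology (St k) (St k)) ?P2"
      using perfect_stage unfolding perfect_map_def by (simp add: continuous_map_prod_top)
    show "proper_map (prod_topology (PT X k) (PT X k)) (prod_topology (St k) (St k)) ?P2"
      using perfect_stage unfolding perfect_map_def by (simp add: proper_map_prod)
    show "?P2 ` topspace (prod_topology (PT X k) (PT X k)) = topspace (prod_topology (St k) (St k))"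
      using perfect_stage unfolding perfect_map_def by (simp add: image_paired_Times)
  qed
  then have qm: "quotient_map (prod_topology (PT X k) (PT X k)) (prod_topology (St k) (St k)) ?P2"
    by (rule perfect_imp_quotient_map)
  define cat where "cat = (\<lambda>(u::nat\<Rightarrow>'a,v::nat\<Rightarrow>'a). (\<lambda>i. if i < k then u i else if i < k + k then v (i - k) else undefined))"
  have cc: "continuous_map (prod_topology (PT X k) (PT X k)) SS (sp_word e (k + k) \<circ> cat)"
    unfolding cat_def by (rule continuous_map_compose[OF continuous_map_cat continuous_map_sp_word])
  have sw: "sp_word e (k + k) (cat (u,v)) = sp_word e k u + sp_word e k v" for u v
  proof -
    have "sp_word e (k + k) (cat (u,v)) = sp_word e (k + k) (\<lambda>i. if i < k then u i else v (i - k))"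
      by (rule sp_word_cong) (simp add: cat_def)
    then show ?thesis by (simp add: sp_word_cat)
  qed
  have eqn: "{x \<in> topspace (prod_topology (PT X k) (PT X k)). ?P2 x \<in> {z \<in> stage X e k \<times> stage X e k. fst z + snd z \<in> U}}
        = {x \<in> topspace (prod_topology (PT X k) (PT X k)). (sp_word e (k + k) \<circ> cat) x \<in> U}"
    using sw by (auto simp: stage_def)
  have opn: "openin (prod_topology (PT X k) (PT X k)) {x \<in> topspace (prod_topology (PT X k) (PT X k)). (sp_word e (k + k) \<circ> cat) x \<in> U}"
    by (rule openin_continuous_map_preimage[OF cc U])
  have sub: "{z \<in> stage X e k \<times> stage X e k. fst z + snd z \<in> U} \<subseteq> topspace (prod_topology (St k) (St k))"
    using topspace_St by auto
  have "openin (prod_topology (PT X k) (PT X k)) {x \<in> topspace (prod_topology (PT X k) (PT X k)). ?P2 x \<in> {z \<in> stage X e k \<times> stage X e k. fst z + snd z \<in> U}}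
      = openin (prod_topology (St k) (St k)) {z \<in> stage X e k \<times> stage X e k. fst z + snd z \<in> U}"
    by (rule qm[unfolded quotient_map_def, THEN conjunct2, rule_format, OF sub])
  then show ?thesis using eqn opn by simp
qed

lemma tube_step:
  assumes U: "openin SS U" and K: "closedin SS K" and L: "closedin SS L"
    and KS: "K \<subseteq> stage X e j" and LS: "L \<subseteq> stage X e j" and KL: "K \<times> L \<subseteq> {z. fst z + snd z \<in> U}"
  shows "\<exists>O1 O2 K2 L2. openin (St j) O1 \<and> openin (St j) O2 \<and> K \<subseteq> O1 \<and> O1 \<subseteq> K2 \<and> L \<subseteq> O2 \<and> O2 \<subseteq> L2
           \<and> closedin SS K2 \<and> closedin SS L2 \<and> K2 \<subseteq> stage X e j \<and> L2 \<subseteq> stage X e j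
           \<and> K2 \<times> L2 \<subseteq> {z. fst z + snd z \<in> U}"
proof -
  have Kc: "closedin (St j) K" by (rule closedin_subset_topspace[OF K KS])
  have Lc: "closedin (St j) L" by (rule closedin_subset_topspace[OF L LS])
  have Kk: "compactin (St j) K" by (rule closedin_compact_space[OF compact_St Kc])
  have Lk: "compactin (St j) L" by (rule closedin_compact_space[OF compact_St Lc])
  have KL': "K \<times> L \<subseteq> {z \<in> stage X e j \<times> stage X e j. fst z + snd z \<in> U}" using KL KS LS by auto
  obtain U1 V1 where UV: "openin (St j) U1" "openin (St j) V1" "K \<subseteq> U1" "L \<subseteq> V1"
      "U1 \<times> V1 \<subseteq> {z \<in> stage X e j \<times> stage X e j. fst z + snd z \<in> U}"
    by (rule Wallace_theorem_prod_topology[OF Kk Lk add_open_stage[OF U] KL'])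
  obtain O1 where O1: "openin (St j) O1" "K \<subseteq> O1" "(St j) closure_of O1 \<subseteq> U1"
    using normal_St[of j] Kc UV unfolding normal_space_alt by metis
  obtain O2 where O2: "openin (St j) O2" "L \<subseteq> O2" "(St j) closure_of O2 \<subseteq> V1"
    using normal_St[of j] Lc UV unfolding normal_space_alt by metis
  show ?thesis
  proof (intro exI conjI)
    show "openin (St j) O1" "openin (St j) O2" "K \<subseteq> O1" "L \<subseteq> O2" by fact+
    show "O1 \<subseteq> (St j) closure_of O1"
      by (rule closure_of_subset[OF openin_subset[OF O1(1)]])
    show "O2 \<subseteq> (St j) closure_of O2"
      by (rule closure_of_subset[OF openin_subset[OF O2(1)]])
    show "closedin SS ((St j) closure_of O1)"
      by (rule closedin_trans_full[OF closedin_closure_of stage_closed])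
    show "closedin SS ((St j) closure_of O2)"
      by (rule closedin_trans_full[OF closedin_closure_of stage_closed])
    show "(St j) closure_of O1 \<subseteq> stage X e j"
      using closure_of_subset_topspace[of "St j" O1] topspace_St[of j] by simp
    show "(St j) closure_of O2 \<subseteq> stage X e j"
      using closure_of_subset_topspace[of "St j" O2] topspace_St[of j] by simp
    show "((St j) closure_of O1) \<times> ((St j) closure_of O2) \<subseteq> {z. fst z + snd z \<in> U}"
      using O1(3) O2(3) UV(5) by blast
  qed
qed

end


context
  fixes X :: "'a topology" and e :: 'a
  assumes XH: "Hausdorff_space X" and Xc: "compact_space X" and e: "e \<in> topspace X"
begin

lemma add_openin:
  assumes U: "openin (SP X e) U"
  shows "openin (prod_topology (SP X e) (SP X e)) {z \<in> sp_carrier X e \<times> sp_carrier X e. fst z + snd z \<in> U}"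
    (is "openin ?PP ?W")
proof (subst openin_subopen, intro ballI)
  fix z0 assume z0: "z0 \<in> ?W"
  obtain M0 N0 where z0e: "z0 = (M0, N0)" by fastforce
  have M0: "M0 \<in> sp_carrier X e" and N0: "N0 \<in> sp_carrier X e" and MN0: "M0 + N0 \<in> U"
    using z0 z0e by auto
  define j0 where "j0 = max (size M0) (size N0)"
  define inv where "inv = (\<lambda>i K L. closedin (SP X e) K \<and> closedin (SP X e) L \<and> K \<subseteq> stage X e (j0 + i)
      \<and> L \<subseteq> stage X e (j0 + i) \<and> K \<times> L \<subseteq> {z. fst z + snd z \<in> U})"
  define R where "R = (\<lambda>i K L (Q :: 'a multiset set \<times> 'a multiset set \<times> 'a multiset set \<times> 'a multiset set).
      openin (subtopology (SP X e) (stage X e (j0 + Suc i))) (fst Q) \<and>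
      openin (subtopology (SP X e) (stage X e (j0 + Suc i))) (fst (snd Q)) \<and>
      K \<subseteq> fst Q \<and> fst Q \<subseteq> fst (snd (snd Q)) \<and> L \<subseteq> fst (snd Q) \<and> fst (snd Q) \<subseteq> snd (snd (snd Q)) \<and>
      inv (Suc i) (fst (snd (snd Q))) (snd (snd (snd Q))))"
  define F where "F = (\<lambda>i K L. SOME Q. R i K L Q)"
  have F: "R i K L (F i K L)" if iv: "inv i K L" for i K L
  proof -
    have i0: "closedin (SP X e) K" "closedin (SP X e) L" "K \<times> L \<subseteq> {z. fst z + snd z \<in> U}"
      using iv by (simp_all add: inv_def)
    have K: "K \<subseteq> stage X e (j0 + Suc i)" and L: "L \<subseteq> stage X e (j0 + Suc i)"
      using that stage_mono[OF XH Xc e, of "j0 + i" "j0 + Suc i"] by (auto simp: inv_def)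
    obtain O1 O2 K2 L2 where Q: "openin (subtopology (SP X e) (stage X e (j0 + Suc i))) O1"
      "openin (subtopology (SP X e) (stage X e (j0 + Suc i))) O2" "K \<subseteq> O1" "O1 \<subseteq> K2" "L \<subseteq> O2" "O2 \<subseteq> L2"
      "closedin (SP X e) K2" "closedin (SP X e) L2" "K2 \<subseteq> stage X e (j0 + Suc i)" "L2 \<subseteq> stage X e (j0 + Suc i)"
      "K2 \<times> L2 \<subseteq> {z. fst z + snd z \<in> U}"
      using tube_step[OF XH Xc e U i0(1) i0(2) K L i0(3)] by blast
    have "R i K L (O1, O2, K2, L2)" using Q by (simp add: R_def inv_def)
    then show ?thesis unfolding F_def by (rule someI)
  qed
  define KL where "KL = rec_nat ({M0}, {N0}) (\<lambda>i p. (fst (snd (snd (F i (fst p) (snd p)))), snd (snd (snd (F i (fst p) (snd p))))))"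
  have KL0: "KL 0 = ({M0}, {N0})" by (simp add: KL_def)
  have KLS: "KL (Suc i) = (fst (snd (snd (F i (fst (KL i)) (snd (KL i))))), snd (snd (snd (F i (fst (KL i)) (snd (KL i))))))" for i
    by (simp add: KL_def)
  have invKL: "inv i (fst (KL i)) (snd (KL i))" for i
  proof (induct i)
    case 0
    have s0: "M0 \<in> stage X e j0" "N0 \<in> stage X e j0"
      using in_stage[OF XH Xc e M0] in_stage[OF XH Xc e N0]
        stage_mono[OF XH Xc e, of "size M0" j0] stage_mono[OF XH Xc e, of "size N0" j0]
      by (auto simp: j0_def)
    then show ?case using MN0 closedin_singleton_SP[OF XH Xc e] by (auto simp: inv_def KL0)
  next
    case (Suc i)
    then show ?case using F[OF Suc] by (simp add: R_def KLS)
  qed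
  define Oa where "Oa = (\<lambda>i. fst (F i (fst (KL i)) (snd (KL i))))"
  define Ob where "Ob = (\<lambda>i. fst (snd (F i (fst (KL i)) (snd (KL i)))))"
  have RKL: "R i (fst (KL i)) (snd (KL i)) (F i (fst (KL i)) (snd (KL i)))" for i
    by (rule F[OF invKL])
  have oa: "openin (subtopology (SP X e) (stage X e (j0 + Suc i))) (Oa i)" for i
    using RKL[of i] by (simp add: R_def Oa_def)
  have ob: "openin (subtopology (SP X e) (stage X e (j0 + Suc i))) (Ob i)" for i
    using RKL[of i] by (simp add: R_def Ob_def)
  have oa1: "fst (KL i) \<subseteq> Oa i" "Oa i \<subseteq> fst (KL (Suc i))" for i
    using RKL[of i] by (simp_all add: R_def Oa_def KLS)
  have ob1: "snd (KL i) \<subseteq> Ob i" "Ob i \<subseteq> snd (KL (Suc i))" for i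
    using RKL[of i] by (simp_all add: R_def Ob_def KLS)
  have monoa: "Oa i \<subseteq> Oa i'" if "i \<le> i'" for i i'
    by (rule lift_Suc_mono_le[of Oa, OF _ that]) (use oa1 in blast)
  have monob: "Ob i \<subseteq> Ob i'" if "i \<le> i'" for i i'
    by (rule lift_Suc_mono_le[of Ob, OF _ that]) (use ob1 in blast)
  define OA where "OA = \<Union>(range Oa)"
  define OB where "OB = \<Union>(range Ob)"
  have opensets: "openin (SP X e) (\<Union>(range O'))"
    if o: "\<And>i. openin (subtopology (SP X e) (stage X e (j0 + Suc i))) (O' i)"
    and mono: "\<And>i i'. i \<le> i' \<Longrightarrow> O' i \<subseteq> O' i'" for O'
  proof -
    define T where "T = (\<lambda>i. SOME T. openin (SP X e) T \<and> O' i = T \<inter> stage X e (j0 + Suc i))"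
    have T: "openin (SP X e) (T i) \<and> O' i = T i \<inter> stage X e (j0 + Suc i)" for i
      unfolding T_def by (rule someI_ex) (use o[of i] in \<open>simp add: openin_subtopology\<close>)
    show ?thesis
      unfolding openin_SP
    proof (intro conjI allI impI)
      show "\<Union>(range O') \<subseteq> sp_carrier X e"
        using T stage_sub[of X e] by blast
      fix m :: nat assume "m \<ge> 1"
      have eq: "{u \<in> topspace (PT X m). sp_word e m u \<in> \<Union>(range O')} =
                (\<Union>i. {u \<in> topspace (PT X m). sp_word e m u \<in> T (i + m)})"
      proof (intro equalityI subsetI)
        fix u assume "u \<in> {u \<in> topspace (PT X m). sp_word e m u \<in> \<Union>(range O')}"
        then obtain i where u: "u \<in> topspace (PT X m)" "sp_word e m u \<in> O' i" by auto
        then have "sp_word e m u \<in> O' (i + m)" using mono[of i "i + m"] by auto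
        then show "u \<in> (\<Union>i. {u \<in> topspace (PT X m). sp_word e m u \<in> T (i + m)})"
          using u T[of "i + m"] by auto
      next
        fix u assume "u \<in> (\<Union>i. {u \<in> topspace (PT X m). sp_word e m u \<in> T (i + m)})"
        then obtain i where u: "u \<in> topspace (PT X m)" "sp_word e m u \<in> T (i + m)" by auto
        have "sp_word e m u \<in> stage X e m" using u(1) by (auto simp: stage_def)
        then have "sp_word e m u \<in> stage X e (j0 + Suc (i + m))"
          using stage_mono[OF XH Xc e, of m "j0 + Suc (i + m)"] by auto
        then have "sp_word e m u \<in> O' (i + m)" using u T[of "i + m"] by auto
        then show "u \<in> {u \<in> topspace (PT X m). sp_word e m u \<in> \<Union>(range O')}" using u by auto
      qed
      have "openin (PT X m) {u \<in> topspace (PT X m). sp_word e m u \<in> T (i + m)}" for i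
        using T[of "i + m"] \<open>m \<ge> 1\<close> unfolding openin_SP by blast
      then show "openin (PT X m) {u \<in> topspace (PT X m). sp_word e m u \<in> \<Union>(range O')}"
        unfolding eq by (intro openin_Union) auto
    qed
  qed
  have oA: "openin (SP X e) OA" unfolding OA_def by (rule opensets[OF oa monoa])
  have oB: "openin (SP X e) OB" unfolding OB_def by (rule opensets[OF ob monob])
  have inA: "M0 \<in> OA" using oa1(1)[of 0] by (auto simp: OA_def KL0)
  have inB: "N0 \<in> OB" using ob1(1)[of 0] by (auto simp: OB_def KL0)
  have sub: "OA \<times> OB \<subseteq> ?W"
  proof
    fix z assume "z \<in> OA \<times> OB"
    then obtain i i' where z: "fst z \<in> Oa i" "snd z \<in> Ob i'" by (auto simp: OA_def OB_def)
    define l where "l = max i i'"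
    have "fst z \<in> Oa l" "snd z \<in> Ob l" using z monoa[of i l] monob[of i' l] by (auto simp: l_def)
    then have "fst z \<in> fst (KL (Suc l))" "snd z \<in> snd (KL (Suc l))" using oa1(2) ob1(2) by blast+
    then have "fst z + snd z \<in> U" "fst z \<in> sp_carrier X e" "snd z \<in> sp_carrier X e"
      using invKL[of "Suc l"] stage_sub[of X e] unfolding inv_def by (auto simp: mem_Times_iff)
    then show "z \<in> ?W" by (auto simp: mem_Times_iff)
  qed
  show "\<exists>T. openin ?PP T \<and> z0 \<in> T \<and> T \<subseteq> ?W"
  proof (intro exI conjI)
    show "openin ?PP (OA \<times> OB)" using oA oB by (simp add: openin_prod_Times_iff)
    show "z0 \<in> OA \<times> OB" using inA inB z0e by simp
  qed (rule sub)
qed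

lemma continuous_map_add_SP:
  "continuous_map (prod_topology (SP X e) (SP X e)) (SP X e) (\<lambda>z. fst z + snd z)"
  unfolding continuous_map_def
proof (intro conjI allI impI)
  show "(\<lambda>z. fst z + snd z) \<in> topspace (prod_topology (SP X e) (SP X e)) \<rightarrow> topspace (SP X e)"
    by (auto intro: sp_carrier_add)
  fix U assume "openin (SP X e) U"
  then have "openin (prod_topology (SP X e) (SP X e)) {z \<in> sp_carrier X e \<times> sp_carrier X e. fst z + snd z \<in> U}"
    by (rule add_openin)
  then show "openin (prod_topology (SP X e) (SP X e)) {z \<in> topspace (prod_topology (SP X e) (SP X e)). fst z + snd z \<in> U}"
    by simp
qed

lemma continuous_map_add_SP':
  assumes "continuous_map Y (SP X e) f" "continuous_map Y (SP X e) g"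
  shows "continuous_map Y (SP X e) (\<lambda>y. f y + g y)"
proof -
  have "continuous_map Y (prod_topology (SP X e) (SP X e)) (\<lambda>y. (f y, g y))"
    using assms by (simp add: continuous_map_pairwise o_def)
  from continuous_map_compose[OF this continuous_map_add_SP] show ?thesis by (simp add: o_def)
qed

lemma continuous_map_sum_SP:
  assumes "\<And>i. i \<in> A \<Longrightarrow> continuous_map Y (SP X e) (f i)"
  shows "continuous_map Y (SP X e) (\<lambda>y. \<Sum>i\<in>A. f i y)"
  using assms
proof (induct A rule: infinite_finite_induct)
  case (infinite A) then show ?case by (simp add: continuous_map_const)
next
  case empty then show ?case by (simp add: continuous_map_const)
next
  case (insert x F)
  then show ?case by (simp add: continuous_map_add_SP')
qed

end


abbreviation HP :: "'x topology \<Rightarrow> 'x \<Rightarrow> nat \<Rightarrow> ('x \<Rightarrow> (nat \<Rightarrow> real) option multiset) \<Rightarrow> ('x \<Rightarrow> (nat \<Rightarrow> real) option multiset) \<Rightarrow> bool" where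
  "HP X x0 n f g \<equiv> homotopic_with (\<lambda>h. h x0 = {#}) X (SPS n) f g"

lemma sum_cont_SPS:
  assumes "\<And>i. i \<in> A \<Longrightarrow> continuous_map Y (SPS n) (f i)"
  shows "continuous_map Y (SPS n) (\<lambda>y. \<Sum>i\<in>A. f i y)"
  by (rule continuous_map_sum_SP[OF Hausdorff_sphere compact_sphere None_in_sphere]) (use assms in auto)

lemma cont_sp_ext:
  assumes y0: "y0 \<in> topspace Y" and a: "continuous_map Y (SPS n) \<alpha>" and a0: "\<alpha> y0 = {#}"
  shows "continuous_map (SP Y y0) (SPS n) (sp_ext \<alpha>)"
proof (rule continuous_map_from_SP[OF y0])
  fix m :: nat assume "m \<ge> 1"
  have "continuous_map (PT Y m) (SPS n) (\<lambda>u. \<Sum>i\<in>{..<m}. \<alpha> (u i))"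
  proof (rule sum_cont_SPS)
    fix i assume "i \<in> {..<m}"
    then have "continuous_map (PT Y m) Y (\<lambda>u. u i)"
      using continuous_map_product_projection[of i "{..<m}" "\<lambda>_. Y"] by simp
    from continuous_map_compose[OF this a] show "continuous_map (PT Y m) (SPS n) (\<lambda>u. \<alpha> (u i))"
      by (simp add: o_def)
  qed
  then show "continuous_map (PT Y m) (SPS n) (\<lambda>u. sp_ext \<alpha> (sp_word y0 m u))"
    by (simp add: sp_ext_sp_word[of \<alpha> y0, OF a0])
qed

lemma cont_sp_ext_hom:
  assumes Z: "locally_compact_space Z" "Hausdorff_space Z" and y0: "y0 \<in> topspace Y"
    and H: "continuous_map (prod_topology Z Y) (SPS n) H"
    and H0: "\<And>z. z \<in> topspace Z \<Longrightarrow> H (z, y0) = {#}"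
  shows "continuous_map (prod_topology Z (SP Y y0)) (SPS n) (\<lambda>(z,M). sp_ext (\<lambda>y. H (z,y)) M)"
proof (rule continuous_map_from_SP_prod[OF Z y0])
  fix m :: nat assume "m \<ge> 1"
  have "continuous_map (prod_topology Z (PT Y m)) (SPS n) (\<lambda>zu. \<Sum>i\<in>{..<m}. H (fst zu, snd zu i))"
  proof (rule sum_cont_SPS)
    fix i assume "i \<in> {..<m}"
    then have "continuous_map (prod_topology Z (PT Y m)) (prod_topology Z Y) (\<lambda>zu. (fst zu, snd zu i))"
      by (auto intro!: continuous_map_pairedI continuous_map_fst
          continuous_map_compose[OF continuous_map_snd continuous_map_product_projection, unfolded o_def])
    from continuous_map_compose[OF this H] show "continuous_map (prod_topology Z (PT Y m)) (SPS n) (\<lambda>zu. H (fst zu, snd zu i))"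
      by (simp add: o_def)
  qed
  then show "continuous_map (prod_topology Z (PT Y m)) (SPS n) (\<lambda>(z, u). case (z, sp_word y0 m u) of (z, M) \<Rightarrow> sp_ext (\<lambda>y. H (z, y)) M)"
  proof (rule continuous_map_eq)
    fix zu assume "zu \<in> topspace (prod_topology Z (PT Y m))"
    then have "fst zu \<in> topspace Z" by (metis mem_Times_iff topspace_prod_topology)
    then show "(\<Sum>i\<in>{..<m}. H (fst zu, snd zu i)) = (\<lambda>(z, u). case (z, sp_word y0 m u) of (z, M) \<Rightarrow> sp_ext (\<lambda>y. H (z, y)) M) zu"
      using H0 by (simp add: case_prod_unfold sp_ext_sp_word)
  qed
qed

section \<open>Homotopy classes\<close>

lemma hcls_eq:
  assumes "HP X x0 n f g"
  shows "hcls X x0 n f = hcls X x0 n g"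
proof -
  have "HP X x0 n f b \<longleftrightarrow> HP X x0 n g b" for b
    using assms homotopic_with_trans homotopic_with_symD by meson
  then show ?thesis by (simp add: hcls_def)
qed

lemma cocycle_in_hcls:
  assumes "cocycle X x0 n f"
  shows "f \<in> hcls X x0 n f"
  using assms by (simp add: hcls_def cocycle_def based_map_def)

lemma rep_hcls:
  assumes "cocycle X x0 n f"
  shows "cocycle X x0 n (rep (hcls X x0 n f)) \<and> HP X x0 n f (rep (hcls X x0 n f))"
proof -
  have "rep (hcls X x0 n f) \<in> hcls X x0 n f"
    using cocycle_in_hcls[OF assms] some_in_eq by blast
  then show ?thesis by (simp add: hcls_def)
qed

lemma HP_eq_on:
  assumes "cocycle X x0 n f" "x0 \<in> topspace X" "\<And>x. x \<in> topspace X \<Longrightarrow> f x = g x"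
  shows "HP X x0 n f g"
  using assms by (intro homotopic_with_equal) (auto simp: cocycle_def based_map_def)

lemma HP_cocycles:
  assumes "HP X x0 n f g"
  shows "cocycle X x0 n f" "cocycle X x0 n g"
  using homotopic_with_imp_continuous_maps[OF assms] homotopic_with_imp_property[OF assms]
  by (auto simp: cocycle_def based_map_def)

lemma HP_compose_right:
  assumes "HP Y y0 n f g" "based_map X x0 Y y0 p"
  shows "HP X x0 n (f \<circ> p) (g \<circ> p)"
  using assms by (intro homotopic_with_compose_continuous_map_right) (auto simp: based_map_def)

lemma HP_sp_ext:
  assumes h: "HP X2 x2 n f g" and x2: "x2 \<in> topspace X2"
    and u: "based_map X1 x1 (SP X2 x2) {#} u"
  shows "HP X1 x1 n (sp_ext f \<circ> u) (sp_ext g \<circ> u)"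
proof -
  obtain h where hc: "continuous_map (prod_topology unitI X2) (SPS n) h"
    and h0: "\<forall>x. h (0, x) = f x" and h1: "\<forall>x. h (1, x) = g x"
    and hp: "\<forall>t\<in>{0..1}. h (t, x2) = {#}"
    using h unfolding homotopic_with_def by auto
  have cH: "continuous_map (prod_topology unitI (SP X2 x2)) (SPS n) (\<lambda>(t,M). sp_ext (\<lambda>y. h (t,y)) M)"
    by (rule cont_sp_ext_hom[OF unitI_lc unitI_H x2 hc]) (use hp in auto)
  have cu: "continuous_map (prod_topology unitI X1) (prod_topology unitI (SP X2 x2)) (\<lambda>(t,x). (t, u x))"
    using u unfolding based_map_def
    by (auto simp: case_prod_unfold intro!: continuous_map_pairedI continuous_map_fst
        continuous_map_compose[OF continuous_map_snd, unfolded o_def])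
  show ?thesis
    unfolding homotopic_with_def
  proof (intro exI conjI allI ballI)
    show "continuous_map (prod_topology unitI X1) (SPS n) ((\<lambda>(t,M). sp_ext (\<lambda>y. h (t,y)) M) \<circ> (\<lambda>(t,x). (t, u x)))"
      by (rule continuous_map_compose[OF cu cH])
    fix x
    show "((\<lambda>(t,M). sp_ext (\<lambda>y. h (t,y)) M) \<circ> (\<lambda>(t,x). (t, u x))) (0, x) = (sp_ext f \<circ> u) x"
      using h0 by (simp add: fun_eq_iff)
    show "((\<lambda>(t,M). sp_ext (\<lambda>y. h (t,y)) M) \<circ> (\<lambda>(t,x). (t, u x))) (1, x) = (sp_ext g \<circ> u) x"
      using h1 by (simp add: fun_eq_iff)
  next
    fix t :: real assume "t \<in> {0..1}"
    show "(\<lambda>x. ((\<lambda>(t,M). sp_ext (\<lambda>y. h (t,y)) M) \<circ> (\<lambda>(t,x). (t, u x))) (t, x)) x1 = {#}"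
      using u by (simp add: based_map_def)
  qed
qed

lemma cocycle_sp_ext:
  assumes a: "cocycle Y y0 n \<alpha>" and y0: "y0 \<in> topspace Y" and u: "based_map X x0 (SP Y y0) {#} u"
  shows "cocycle X x0 n (sp_ext \<alpha> \<circ> u)"
proof -
  have "continuous_map (SP Y y0) (SPS n) (sp_ext \<alpha>)"
    using a y0 by (intro cont_sp_ext) (auto simp: cocycle_def based_map_def)
  then show ?thesis using u by (auto simp: cocycle_def based_map_def intro: continuous_map_compose)
qed

lemma cocycle_compose:
  assumes a: "cocycle Y y0 n \<alpha>" and p: "based_map X x0 Y y0 p"
  shows "cocycle X x0 n (\<alpha> \<circ> p)"
  using assms by (auto simp: cocycle_def based_map_def intro: continuous_map_compose)

lemma naturality_square:
  assumes p: "based_map X1 x1 Y1 y1 p" and q: "based_map X2 x2 Y2 y2 q"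
    and u: "based_map X1 x1 (SP X2 x2) {#} u" and v: "based_map Y1 y1 (SP Y2 y2) {#} v"
    and uv: "\<forall>x\<in>topspace X1. v (p x) = SPmap y2 q (u x)"
    and x1: "x1 \<in> topspace X1" and x2: "x2 \<in> topspace X2"
    and \<kappa>: "\<kappa> \<in> Hred Y2 y2 n"
  shows "sp_pull X1 x1 n u (pull X2 x2 n q \<kappa>) = pull X1 x1 n p (sp_pull Y1 y1 n v \<kappa>)"
proof -
  have y1: "y1 \<in> topspace Y1" using p x1 unfolding based_map_def by (metis cm_in)
  have y2: "y2 \<in> topspace Y2" using q x2 unfolding based_map_def by (metis cm_in)
  obtain \<alpha>0 where a0: "cocycle Y2 y2 n \<alpha>0" and k: "\<kappa> = hcls Y2 y2 n \<alpha>0"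
    using \<kappa> by (auto simp: Hred_def)
  define \<alpha> where "\<alpha> = rep \<kappa>"
  have a: "cocycle Y2 y2 n \<alpha>" and ha: "HP Y2 y2 n \<alpha>0 \<alpha>"
    using rep_hcls[OF a0] by (simp_all add: \<alpha>_def k)
  have aq: "cocycle X2 x2 n (\<alpha> \<circ> q)" by (rule cocycle_compose[OF a q])
  define \<beta> where "\<beta> = rep (pull X2 x2 n q \<kappa>)"
  have hb: "HP X2 x2 n (\<alpha> \<circ> q) \<beta>"
    using rep_hcls[OF aq] by (simp add: \<beta>_def pull_def \<alpha>_def)
  have av: "cocycle Y1 y1 n (sp_ext \<alpha> \<circ> v)" by (rule cocycle_sp_ext[OF a y2 v])
  define \<gamma> where "\<gamma> = rep (sp_pull Y1 y1 n v \<kappa>)"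
  have hg: "HP Y1 y1 n (sp_ext \<alpha> \<circ> v) \<gamma>"
    using rep_hcls[OF av] by (simp add: \<gamma>_def sp_pull_def \<alpha>_def)
  have LHS: "sp_pull X1 x1 n u (pull X2 x2 n q \<kappa>) = hcls X1 x1 n (sp_ext \<beta> \<circ> u)"
    by (simp add: sp_pull_def \<beta>_def)
  have RHS: "pull X1 x1 n p (sp_pull Y1 y1 n v \<kappa>) = hcls X1 x1 n (\<gamma> \<circ> p)"
    by (simp add: pull_def \<gamma>_def)
  have h1: "HP X1 x1 n (sp_ext (\<alpha> \<circ> q) \<circ> u) (sp_ext \<beta> \<circ> u)"
    by (rule HP_sp_ext[OF hb x2 u])
  have h2: "HP X1 x1 n (sp_ext \<alpha> \<circ> v \<circ> p) (\<gamma> \<circ> p)"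
    by (rule HP_compose_right[OF hg p])
  have c3: "cocycle X1 x1 n (sp_ext (\<alpha> \<circ> q) \<circ> u)" by (rule HP_cocycles(1)[OF h1])
  have a_y2: "\<alpha> y2 = {#}" using a by (simp add: cocycle_def based_map_def)
  have h3: "HP X1 x1 n (sp_ext (\<alpha> \<circ> q) \<circ> u) (sp_ext \<alpha> \<circ> v \<circ> p)"
    by (rule HP_eq_on[OF c3 x1]) (use uv sp_ext_SPmap[of \<alpha> y2 q, OF a_y2] in auto)
  have "HP X1 x1 n (sp_ext \<beta> \<circ> u) (\<gamma> \<circ> p)"
    by (rule homotopic_with_trans[OF homotopic_with_trans[OF homotopic_with_symD[OF h1] h3] h2])
  then show ?thesis unfolding LHS RHS by (rule hcls_eq)
qed


definition dunion :: "'b topology \<Rightarrow> 'd topology \<Rightarrow> ('b + 'd) topology" where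
  "dunion B D = topology (\<lambda>U. U \<subseteq> Inl ` topspace B \<union> Inr ` topspace D \<and>
      openin B {b. Inl b \<in> U} \<and> openin D {d. Inr d \<in> U})"

lemma dunion_istopology:
  "istopology (\<lambda>U. U \<subseteq> Inl ` topspace B \<union> Inr ` topspace D \<and> openin B {b. Inl b \<in> U} \<and> openin D {d. Inr d \<in> U})"
proof -
  have i1: "{b. Inl b \<in> S \<inter> T} = {b. Inl b \<in> S} \<inter> {b. Inl b \<in> T}" for S T by blast
  have i2: "{d. Inr d \<in> S \<inter> T} = {d. Inr d \<in> S} \<inter> {d. Inr d \<in> T}" for S T by blast
  have u1: "{b. Inl b \<in> \<Union>K} = \<Union>((\<lambda>S. {b. Inl b \<in> S}) ` K)" for K by blast
  have u2: "{d. Inr d \<in> \<Union>K} = \<Union>((\<lambda>S. {d. Inr d \<in> S}) ` K)" for K by blast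
  show ?thesis unfolding istopology_def i1 i2 u1 u2
    by (auto intro!: openin_Int openin_Union)
qed

lemma openin_dunion:
  "openin (dunion B D) U \<longleftrightarrow> U \<subseteq> Inl ` topspace B \<union> Inr ` topspace D \<and>
      openin B {b. Inl b \<in> U} \<and> openin D {d. Inr d \<in> U}"
  unfolding dunion_def topology_inverse'[OF dunion_istopology] by (rule refl)

lemma topspace_dunion: "topspace (dunion B D) = Inl ` topspace B \<union> Inr ` topspace D"
proof -
  have "openin (dunion B D) (Inl ` topspace B \<union> Inr ` topspace D)"
  proof -
    have "{b. Inl b \<in> Inl ` topspace B \<union> Inr ` topspace D} = topspace B" by auto
    moreover have "{d. Inr d \<in> Inl ` topspace B \<union> Inr ` topspace D} = topspace D" by auto
    ultimately show ?thesis unfolding openin_dunion by simp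
  qed
  then have "Inl ` topspace B \<union> Inr ` topspace D \<subseteq> topspace (dunion B D)" by (rule openin_subset)
  moreover have "topspace (dunion B D) \<subseteq> Inl ` topspace B \<union> Inr ` topspace D"
    using openin_dunion[of B D "topspace (dunion B D)"] by simp
  ultimately show ?thesis by blast
qed

lemma continuous_from_prod_dunion:
  assumes c1: "continuous_map (prod_topology Z B) W (\<lambda>(z,b). \<psi> (z, Inl b))"
    and c2: "continuous_map (prod_topology Z D) W (\<lambda>(z,d). \<psi> (z, Inr d))"
  shows "continuous_map (prod_topology Z (dunion B D)) W \<psi>"
  unfolding continuous_map_def
proof (intro conjI allI impI)
  show "\<psi> \<in> topspace (prod_topology Z (dunion B D)) \<rightarrow> topspace W"
  proof
    fix p assume "p \<in> topspace (prod_topology Z (dunion B D))"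
    then obtain z y where p: "p = (z,y)" "z \<in> topspace Z" "y \<in> Inl ` topspace B \<union> Inr ` topspace D"
      by (auto simp: topspace_dunion)
    then consider b where "y = Inl b" "b \<in> topspace B" | d where "y = Inr d" "d \<in> topspace D" by blast
    then show "\<psi> p \<in> topspace W"
    proof cases
      case 1 then show ?thesis using cm_in[OF c1, of "(z,b)"] p by simp
    next
      case 2 then show ?thesis using cm_in[OF c2, of "(z,d)"] p by simp
    qed
  qed
next
  fix U assume U: "openin W U"
  let ?P = "{p \<in> topspace (prod_topology Z (dunion B D)). \<psi> p \<in> U}"
  have o1: "openin (prod_topology Z B) {q \<in> topspace (prod_topology Z B). (\<lambda>(z,b). \<psi> (z, Inl b)) q \<in> U}"
    using c1 U by (simp add: continuous_map_def)
  have o2: "openin (prod_topology Z D) {q \<in> topspace (prod_topology Z D). (\<lambda>(z,d). \<psi> (z, Inr d)) q \<in> U}"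
    using c2 U by (simp add: continuous_map_def)
  show "openin (prod_topology Z (dunion B D)) ?P"
  proof (subst openin_subopen, intro ballI)
    fix p assume pP: "p \<in> ?P"
    then obtain z y where p: "p = (z,y)" "z \<in> topspace Z" "y \<in> Inl ` topspace B \<union> Inr ` topspace D" "\<psi> (z,y) \<in> U"
      by (auto simp: topspace_dunion)
    then consider b where "y = Inl b" "b \<in> topspace B" | d where "y = Inr d" "d \<in> topspace D" by blast
    then show "\<exists>T. openin (prod_topology Z (dunion B D)) T \<and> p \<in> T \<and> T \<subseteq> ?P"
    proof cases
      case 1
      have mem: "(z,b) \<in> {q \<in> topspace (prod_topology Z B). (\<lambda>(z,b). \<psi> (z, Inl b)) q \<in> U}"
        using p 1 by auto
      have "\<exists>V O1. openin Z V \<and> openin B O1 \<and> z \<in> V \<and> b \<in> O1 \<and> V \<times> O1 \<subseteq> {q \<in> topspace (prod_topology Z B). (\<lambda>(z,b). \<psi> (z, Inl b)) q \<in> U}"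
        using o1[unfolded openin_prod_topology_alt, rule_format, OF mem] .
      then obtain V O1 where VO: "openin Z V" "openin B O1" "z \<in> V" "b \<in> O1"
        "V \<times> O1 \<subseteq> {q \<in> topspace (prod_topology Z B). (\<lambda>(z,b). \<psi> (z, Inl b)) q \<in> U}"
        by (elim exE conjE) (rule that)
      have "openin (dunion B D) (Inl ` O1)"
        unfolding openin_dunion using VO(2) openin_subset[OF VO(2)]
        by (auto simp: image_iff inj_image_mem_iff)
      then have "openin (prod_topology Z (dunion B D)) (V \<times> Inl ` O1)"
        using VO(1) by (simp add: openin_prod_Times_iff)
      moreover have "p \<in> V \<times> Inl ` O1" using p 1 VO by auto
      moreover have "V \<times> Inl ` O1 \<subseteq> ?P" (is "?TT \<subseteq> _")
      proof
        fix q assume "q \<in> ?TT"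
        then obtain z' b' where q: "q = (z', Inl b')" "z' \<in> V" "b' \<in> O1" by auto
        then have "(z',b') \<in> {q \<in> topspace (prod_topology Z B). (\<lambda>(z,b). \<psi> (z, Inl b)) q \<in> U}"
          using VO(5) by (meson mem_Sigma_iff subsetD)
        then show "q \<in> ?P" using q by (simp add: topspace_dunion)
      qed
      ultimately show ?thesis by (intro exI conjI)
    next
      case 2
      have mem: "(z,d) \<in> {q \<in> topspace (prod_topology Z D). (\<lambda>(z,d). \<psi> (z, Inr d)) q \<in> U}"
        using p 2 by auto
      have "\<exists>V O1. openin Z V \<and> openin D O1 \<and> z \<in> V \<and> d \<in> O1 \<and> V \<times> O1 \<subseteq> {q \<in> topspace (prod_topology Z D). (\<lambda>(z,d). \<psi> (z, Inr d)) q \<in> U}"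
        using o2[unfolded openin_prod_topology_alt, rule_format, OF mem] .
      then obtain V O1 where VO: "openin Z V" "openin D O1" "z \<in> V" "d \<in> O1"
        "V \<times> O1 \<subseteq> {q \<in> topspace (prod_topology Z D). (\<lambda>(z,d). \<psi> (z, Inr d)) q \<in> U}"
        by (elim exE conjE) (rule that)
      have "openin (dunion B D) (Inr ` O1)"
        unfolding openin_dunion using VO(2) openin_subset[OF VO(2)]
        by (auto simp: image_iff inj_image_mem_iff)
      then have "openin (prod_topology Z (dunion B D)) (V \<times> Inr ` O1)"
        using VO(1) by (simp add: openin_prod_Times_iff)
      moreover have "p \<in> V \<times> Inr ` O1" using p 2 VO by auto
      moreover have "V \<times> Inr ` O1 \<subseteq> ?P" (is "?TT \<subseteq> _")
      proof
        fix q assume "q \<in> ?TT"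
        then obtain z' d' where q: "q = (z', Inr d')" "z' \<in> V" "d' \<in> O1" by auto
        then have "(z',d') \<in> {q \<in> topspace (prod_topology Z D). (\<lambda>(z,d). \<psi> (z, Inr d)) q \<in> U}"
          using VO(5) by (meson mem_Sigma_iff subsetD)
        then show "q \<in> ?P" using q by (simp add: topspace_dunion)
      qed
      ultimately show ?thesis by (intro exI conjI)
    qed
  qed
qed

section \<open>The test space\<close>

definition jB :: "'b \<Rightarrow> ('a + 'b) \<times> real" where "jB b = (Inr b, 0)"

definition Gm :: "'a \<Rightarrow> ('a \<Rightarrow> 'b) \<Rightarrow> 'a \<times> real \<Rightarrow> ('a + 'b) \<times> real" where
  "Gm a0 f p = (if snd p = 0 \<or> fst p = a0 then (Inr (f (fst p)), 0) else (Inl (fst p), snd p))"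

definition carZ :: "'a topology \<Rightarrow> 'a \<Rightarrow> 'b topology \<Rightarrow> ('a \<Rightarrow> 'b) \<Rightarrow> (('a + 'b) \<times> real) set" where
  "carZ A a0 B f = jB ` topspace B \<union> Gm a0 f ` topspace (prod_topology A unitI)"

definition Zfin :: "'a topology \<Rightarrow> 'a \<Rightarrow> 'b topology \<Rightarrow> ('a \<Rightarrow> 'b) \<Rightarrow> (('a + 'b) \<times> real) topology" where
  "Zfin A a0 B f = topology (\<lambda>U. U \<subseteq> carZ A a0 B f \<and> openin B {b \<in> topspace B. jB b \<in> U} \<and>
       openin (prod_topology A unitI) {p \<in> topspace (prod_topology A unitI). Gm a0 f p \<in> U})"

definition zc :: "('b \<Rightarrow> 'w) \<Rightarrow> ('a \<times> real \<Rightarrow> 'w) \<Rightarrow> ('a + 'b) \<times> real \<Rightarrow> 'w" where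
  "zc hb ha z = (case fst z of Inr b \<Rightarrow> hb b | Inl x \<Rightarrow> ha (x, snd z))"

lemma zc_jB [simp]: "zc hb ha (jB b) = hb b" by (simp add: zc_def jB_def)

lemma zc_Gm: "zc hb ha (Gm a0 f (x,s)) = (if s = 0 \<or> x = a0 then hb (f x) else ha (x,s))"
  by (simp add: zc_def Gm_def)

lemma Zfin_istopology:
  "istopology (\<lambda>U. U \<subseteq> carZ A a0 B f \<and> openin B {b \<in> topspace B. jB b \<in> U} \<and>
       openin (prod_topology A unitI) {p \<in> topspace (prod_topology A unitI). Gm a0 f p \<in> U})"
proof -
  have i1: "{b \<in> topspace B. jB b \<in> S \<inter> T} = {b \<in> topspace B. jB b \<in> S} \<inter> {b \<in> topspace B. jB b \<in> T}" for S T by blast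
  have i2: "{p \<in> topspace (prod_topology A unitI). Gm a0 f p \<in> S \<inter> T} =
     {p \<in> topspace (prod_topology A unitI). Gm a0 f p \<in> S} \<inter> {p \<in> topspace (prod_topology A unitI). Gm a0 f p \<in> T}" for S T by blast
  have u1: "{b \<in> topspace B. jB b \<in> \<Union>K} = \<Union>((\<lambda>S. {b \<in> topspace B. jB b \<in> S}) ` K)" for K by blast
  have u2: "{p \<in> topspace (prod_topology A unitI). Gm a0 f p \<in> \<Union>K} = \<Union>((\<lambda>S. {p \<in> topspace (prod_topology A unitI). Gm a0 f p \<in> S}) ` K)" for K by blast
  show ?thesis unfolding istopology_def i1 i2 u1 u2
    by (auto intro!: openin_Int openin_Union)
qed

lemma openin_Zfin:
  "openin (Zfin A a0 B f) U \<longleftrightarrow> U \<subseteq> carZ A a0 B f \<and> openin B {b \<in> topspace B. jB b \<in> U} \<and>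
       openin (prod_topology A unitI) {p \<in> topspace (prod_topology A unitI). Gm a0 f p \<in> U}"
  unfolding Zfin_def topology_inverse'[OF Zfin_istopology] by (rule refl)

lemma topspace_Zfin: "topspace (Zfin A a0 B f) = carZ A a0 B f"
proof -
  have "openin (Zfin A a0 B f) (carZ A a0 B f)"
    unfolding openin_Zfin
  proof (intro conjI subset_refl)
    have "{b \<in> topspace B. jB b \<in> carZ A a0 B f} = topspace B" by (auto simp: carZ_def)
    then show "openin B {b \<in> topspace B. jB b \<in> carZ A a0 B f}" by (simp only: openin_topspace)
    have "{p \<in> topspace (prod_topology A unitI). Gm a0 f p \<in> carZ A a0 B f} = topspace (prod_topology A unitI)"
      unfolding carZ_def by blast
    then show "openin (prod_topology A unitI) {p \<in> topspace (prod_topology A unitI). Gm a0 f p \<in> carZ A a0 B f}"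
      by (simp only: openin_topspace)
  qed
  then have "carZ A a0 B f \<subseteq> topspace (Zfin A a0 B f)" by (rule openin_subset)
  moreover have "topspace (Zfin A a0 B f) \<subseteq> carZ A a0 B f"
    using openin_Zfin[of A a0 B f "topspace (Zfin A a0 B f)"] by simp
  ultimately show ?thesis by blast
qed

lemma cont_jB: "continuous_map B (Zfin A a0 B f) jB"
  unfolding continuous_map_def
proof (intro conjI allI impI)
  show "jB \<in> topspace B \<rightarrow> topspace (Zfin A a0 B f)" by (auto simp: topspace_Zfin carZ_def)
  fix U assume "openin (Zfin A a0 B f) U"
  then show "openin B {x \<in> topspace B. jB x \<in> U}" unfolding openin_Zfin by blast
qed

lemma cont_Gm: "continuous_map (prod_topology A unitI) (Zfin A a0 B f) (Gm a0 f)"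
  unfolding continuous_map_def
proof (intro conjI allI impI)
  show "Gm a0 f \<in> topspace (prod_topology A unitI) \<rightarrow> topspace (Zfin A a0 B f)"
    unfolding topspace_Zfin carZ_def by blast
  fix U assume "openin (Zfin A a0 B f) U"
  then show "openin (prod_topology A unitI) {x \<in> topspace (prod_topology A unitI). Gm a0 f x \<in> U}"
    unfolding openin_Zfin by blast
qed

lemma cont_from_Zfin:
  assumes c1: "continuous_map B W (\<phi> \<circ> jB)" and c2: "continuous_map (prod_topology A unitI) W (\<phi> \<circ> Gm a0 f)"
  shows "continuous_map (Zfin A a0 B f) W \<phi>"
  unfolding continuous_map_def
proof (intro conjI allI impI)
  show "\<phi> \<in> topspace (Zfin A a0 B f) \<rightarrow> topspace W"
  proof
    fix z assume "z \<in> topspace (Zfin A a0 B f)"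
    then consider b where "b \<in> topspace B" "z = jB b" | p where "p \<in> topspace (prod_topology A unitI)" "z = Gm a0 f p"
      by (auto simp: topspace_Zfin carZ_def)
    then show "\<phi> z \<in> topspace W"
    proof cases
      case 1 then show ?thesis using cm_in[OF c1 1(1)] by simp
    next
      case 2 then show ?thesis using cm_in[OF c2 2(1)] by simp
    qed
  qed
  fix U assume U: "openin W U"
  show "openin (Zfin A a0 B f) {z \<in> topspace (Zfin A a0 B f). \<phi> z \<in> U}"
    unfolding openin_Zfin
  proof (intro conjI)
    show "{z \<in> topspace (Zfin A a0 B f). \<phi> z \<in> U} \<subseteq> carZ A a0 B f" by (auto simp: topspace_Zfin)
    have "{b \<in> topspace B. jB b \<in> {z \<in> topspace (Zfin A a0 B f). \<phi> z \<in> U}} = {b \<in> topspace B. (\<phi> \<circ> jB) b \<in> U}"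
      by (auto simp: topspace_Zfin carZ_def)
    then show "openin B {b \<in> topspace B. jB b \<in> {z \<in> topspace (Zfin A a0 B f). \<phi> z \<in> U}}"
      using openin_continuous_map_preimage[OF c1 U] by simp
    have "{p \<in> topspace (prod_topology A unitI). Gm a0 f p \<in> {z \<in> topspace (Zfin A a0 B f). \<phi> z \<in> U}}
          = {p \<in> topspace (prod_topology A unitI). (\<phi> \<circ> Gm a0 f) p \<in> U}"
      unfolding topspace_Zfin carZ_def by auto
    then show "openin (prod_topology A unitI) {p \<in> topspace (prod_topology A unitI). Gm a0 f p \<in> {z \<in> topspace (Zfin A a0 B f). \<phi> z \<in> U}}"
      using openin_continuous_map_preimage[OF c2 U] by simp
  qed
qed

lemma quotient_Zfin:
  "quotient_map (dunion B (prod_topology A unitI)) (Zfin A a0 B f) (case_sum jB (Gm a0 f))"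
  unfolding quotient_map_def
proof (intro conjI allI impI)
  show "case_sum jB (Gm a0 f) ` topspace (dunion B (prod_topology A unitI)) = topspace (Zfin A a0 B f)"
    by (auto simp: topspace_dunion topspace_Zfin carZ_def image_Un image_image)
  fix U assume U: "U \<subseteq> topspace (Zfin A a0 B f)"
  have e1: "{b. Inl b \<in> {x \<in> topspace (dunion B (prod_topology A unitI)). case_sum jB (Gm a0 f) x \<in> U}} = {b \<in> topspace B. jB b \<in> U}"
    by (auto simp: topspace_dunion)
  have e2: "{d. Inr d \<in> {x \<in> topspace (dunion B (prod_topology A unitI)). case_sum jB (Gm a0 f) x \<in> U}} = {p \<in> topspace (prod_topology A unitI). Gm a0 f p \<in> U}"
    by (auto simp: topspace_dunion)
  show "openin (dunion B (prod_topology A unitI)) {x \<in> topspace (dunion B (prod_topology A unitI)). case_sum jB (Gm a0 f) x \<in> U} = openin (Zfin A a0 B f) U"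
    unfolding openin_dunion openin_Zfin e1 e2 using U by (auto simp: topspace_dunion topspace_Zfin)
qed

lemma cont_from_Zfin_prod:
  assumes c1: "continuous_map (prod_topology unitI B) W (\<lambda>(t,b). \<phi> (t, jB b))"
    and c2: "continuous_map (prod_topology unitI (prod_topology A unitI)) W (\<lambda>(t,p). \<phi> (t, Gm a0 f p))"
  shows "continuous_map (prod_topology unitI (Zfin A a0 B f)) W \<phi>"
proof -
  have qm: "quotient_map (prod_topology unitI (dunion B (prod_topology A unitI))) (prod_topology unitI (Zfin A a0 B f))
              (\<lambda>(t,y). (t, case_sum jB (Gm a0 f) y))"
    by (rule quotient_map_prod_right[OF unitI_lc disjI1[OF unitI_H] quotient_Zfin])
  have "continuous_map (prod_topology unitI (dunion B (prod_topology A unitI))) W (\<phi> \<circ> (\<lambda>(t,y). (t, case_sum jB (Gm a0 f) y)))"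
    by (rule continuous_from_prod_dunion) (use c1 c2 in \<open>simp_all add: o_def case_prod_unfold\<close>)
  then show ?thesis using continuous_compose_quotient_map[OF qm] by blast
qed


lemma SPmap_const_None: "SPmap None (\<lambda>_. None) M = {#}"
  by (induct M) (auto simp: SPmap_add_mset)

lemma susp_0 [simp]: "susp_cocycle n \<alpha> (x, 0) = {#}"
proof -
  have "(\<lambda>y. susp_pt n y 0) = (\<lambda>_. None)" by (auto simp: fun_eq_iff susp_pt_def split: option.split)
  then show ?thesis by (simp add: susp_cocycle_def SPmap_const_None)
qed

lemma susp_1 [simp]: "susp_cocycle n \<alpha> (x, 1) = {#}"
proof -
  have "(\<lambda>y. susp_pt n y 1) = (\<lambda>_. None)" by (auto simp: fun_eq_iff susp_pt_def split: option.split)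
  then show ?thesis by (simp add: susp_cocycle_def SPmap_const_None)
qed

lemma susp_empty: "\<alpha> x = {#} \<Longrightarrow> susp_cocycle n \<alpha> (x, s) = {#}"
  by (simp add: susp_cocycle_def)

lemma cont_susp_cocycle:
  assumes "continuous_map A (SPS n) \<alpha>"
  shows "continuous_map (prod_topology A unitI) (SPS (Suc n)) (susp_cocycle n \<alpha>)"
proof -
  have c: "continuous_map (prod_topology A unitI) (prod_topology unitI (SPS n)) (\<lambda>(x,s). (s, \<alpha> x))"
    using assms by (auto simp: case_prod_unfold intro!: continuous_map_pairedI continuous_map_snd
        continuous_map_compose[OF continuous_map_fst, unfolded o_def])
  have "continuous_map (prod_topology A unitI) (SPS (Suc n)) ((\<lambda>(s,M). SPmap None (\<lambda>y. susp_pt n y s) M) \<circ> (\<lambda>(x,s). (s, \<alpha> x)))"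
    by (rule continuous_map_compose[OF c cont_SPsusp])
  moreover have "(\<lambda>(s,M). SPmap None (\<lambda>y. susp_pt n y s) M) \<circ> (\<lambda>(x,s). (s, \<alpha> x)) = susp_cocycle n \<alpha>"
    by (auto simp: fun_eq_iff susp_cocycle_def)
  ultimately show ?thesis by simp
qed

lemma cont_susp_hom:
  assumes "continuous_map (prod_topology unitI A) (SPS n) k"
  shows "continuous_map (prod_topology unitI (prod_topology A unitI)) (SPS (Suc n)) (\<lambda>(t,p). susp_cocycle n (\<lambda>x. k (t,x)) p)"
proof -
  have c0: "continuous_map (prod_topology unitI (prod_topology A unitI)) (prod_topology unitI A) (\<lambda>(t,p). (t, fst p))"
    by (auto simp: case_prod_unfold intro!: continuous_map_pairedI continuous_map_fst
        continuous_map_compose[OF continuous_map_snd continuous_map_fst, unfolded o_def])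
  have c: "continuous_map (prod_topology unitI (prod_topology A unitI)) (prod_topology unitI (SPS n)) (\<lambda>(t,p). (snd p, k (t, fst p)))"
    using continuous_map_compose[OF c0 assms]
    by (auto simp: case_prod_unfold o_def intro!: continuous_map_pairedI
        continuous_map_compose[OF continuous_map_snd continuous_map_snd, unfolded o_def])
  have "continuous_map (prod_topology unitI (prod_topology A unitI)) (SPS (Suc n)) ((\<lambda>(s,M). SPmap None (\<lambda>y. susp_pt n y s) M) \<circ> (\<lambda>(t,p). (snd p, k (t, fst p))))"
    by (rule continuous_map_compose[OF c cont_SPsusp])
  moreover have "(\<lambda>(s,M). SPmap None (\<lambda>y. susp_pt n y s) M) \<circ> (\<lambda>(t,p). (snd p, k (t, fst p))) = (\<lambda>(t,p). susp_cocycle n (\<lambda>x. k (t,x)) p)"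
    by (auto simp: fun_eq_iff susp_cocycle_def)
  ultimately show ?thesis by simp
qed

lemma cont_unit_real:
  assumes "continuous_map X euclideanreal h" "\<And>x. x \<in> topspace X \<Longrightarrow> h x \<in> {0..1}"
  shows "continuous_map X unitI h"
  using assms by (auto simp: continuous_map_in_subtopology)

lemma cont_eu_of_unit:
  assumes "continuous_map X unitI h"
  shows "continuous_map X euclideanreal h"
  using assms by (simp add: continuous_map_in_subtopology)

lemma cont_flip: "continuous_map (prod_topology B unitI) (prod_topology B unitI) (\<lambda>(b,t). (b, 1 - t))"
proof -
  have "continuous_map (prod_topology B unitI) unitI (\<lambda>p. 1 - snd p)"
    by (rule cont_unit_real) (auto intro!: continuous_map_diff cont_eu_of_unit[OF continuous_map_snd])
  then show ?thesis
    by (auto simp: case_prod_unfold intro!: continuous_map_pairedI continuous_map_fst)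
qed

section \<open>Cofibration sequences\<close>

context
  fixes A :: "'a topology" and a0 :: 'a and B :: "'b topology" and b0 :: 'b
    and C :: "'c topology" and c0 :: 'c and f :: "'a \<Rightarrow> 'b" and g :: "'b \<Rightarrow> 'c"
  assumes seq: "based_cofib_seq A a0 B b0 C c0 f g"
begin

lemma cof: "based_cofibration A a0 B b0 f" using seq by (simp add: based_cofib_seq_def)
lemma a0A: "a0 \<in> topspace A" using cof by (simp add: based_cofibration_def)
lemma fc: "continuous_map A B f" using cof by (simp add: based_cofibration_def based_map_def)
lemma fa0: "f a0 = b0" using cof by (simp add: based_cofibration_def based_map_def)
lemma gq: "quotient_map B C g" using seq by (simp add: based_cofib_seq_def)
lemma gc: "continuous_map B C g" using gq by (rule quotient_imp_continuous_map)
lemma gb0: "g b0 = c0" using seq by (simp add: based_cofib_seq_def)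
lemma gf: "x \<in> topspace A \<Longrightarrow> g (f x) = c0" using seq by (simp add: based_cofib_seq_def)
lemma b0B: "b0 \<in> topspace B" using cm_in[OF fc a0A] fa0 by simp
lemma c0C: "c0 \<in> topspace C" using cm_in[OF gc b0B] gb0 by simp
lemma fib: "b \<in> topspace B \<Longrightarrow> b' \<in> topspace B \<Longrightarrow> g b = g b' \<Longrightarrow> b \<noteq> b' \<Longrightarrow>
    b \<in> f ` topspace A \<and> b' \<in> f ` topspace A"
  using seq unfolding based_cofib_seq_def by blast
lemma gsurj: "c \<in> topspace C \<Longrightarrow> \<exists>b \<in> topspace B. g b = c"
  using quotient_imp_surjective_map[OF gq] by (metis imageE)

lemma HEP: "\<exists>H. continuous_map (prod_topology B unitI) (Zfin A a0 B f) H \<and>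
      (\<forall>b\<in>topspace B. H (b,0) = jB b) \<and>
      (\<forall>x\<in>topspace A. \<forall>t\<in>{0..1}. H (f x, t) = Gm a0 f (x,t)) \<and>
      (\<forall>t\<in>{0..1}. H (b0, t) = jB b0)"
proof -
  have hep: "\<forall>(Z :: (('a + 'b) \<times> real) topology) z0 h G.
        z0 \<in> topspace Z \<and> based_map B b0 Z z0 h \<and>
        continuous_map (prod_topology A unitI) Z G \<and>
        (\<forall>x\<in>topspace A. G (x, 0) = h (f x)) \<and> (\<forall>t\<in>{0..1}. G (a0, t) = z0)
        \<longrightarrow> (\<exists>H. continuous_map (prod_topology B unitI) Z H \<and>
               (\<forall>b\<in>topspace B. H (b, 0) = h b) \<and>
               (\<forall>x\<in>topspace A. \<forall>t\<in>{0..1}. H (f x, t) = G (x, t)) \<and>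
               (\<forall>t\<in>{0..1}. H (b0, t) = z0))"
    using cof by (simp add: based_cofibration_def)
  have z0: "jB b0 \<in> topspace (Zfin A a0 B f)" using cm_in[OF cont_jB[of B A a0 f] b0B] by simp
  have bm: "based_map B b0 (Zfin A a0 B f) (jB b0) jB" by (simp add: based_map_def cont_jB)
  have G0: "\<forall>x\<in>topspace A. Gm a0 f (x, 0) = jB (f x)" by (simp add: Gm_def jB_def)
  have Ga: "\<forall>t\<in>{0..1}. Gm a0 f (a0, t) = jB b0" by (simp add: Gm_def jB_def fa0)
  note h1 = spec[OF spec[OF spec[OF spec[OF hep, of "Zfin A a0 B f"], of "jB b0"], of jB], of "Gm a0 f"]
  have "jB b0 \<in> topspace (Zfin A a0 B f) \<and> based_map B b0 (Zfin A a0 B f) (jB b0) jB \<and>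
        continuous_map (prod_topology A unitI) (Zfin A a0 B f) (Gm a0 f) \<and>
        (\<forall>x\<in>topspace A. Gm a0 f (x, 0) = jB (f x)) \<and> (\<forall>t\<in>{0..1}. Gm a0 f (a0, t) = jB b0)"
    using z0 bm cont_Gm[of A a0 B f] G0 Ga by blast
  from mp[OF h1 this] show ?thesis .
qed

definition dsc :: "('b \<Rightarrow> 'w) \<Rightarrow> 'c \<Rightarrow> 'w" where
  "dsc \<phi> c = \<phi> (SOME b. b \<in> topspace B \<and> g b = c)"

lemma dsc_eq:
  assumes "\<And>x. x \<in> topspace A \<Longrightarrow> \<phi> (f x) = z" and b: "b \<in> topspace B"
  shows "dsc \<phi> (g b) = \<phi> b"
proof -
  have ex: "\<exists>b'. b' \<in> topspace B \<and> g b' = g b" using b by blast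
  define b' where "b' = (SOME b'. b' \<in> topspace B \<and> g b' = g b)"
  have b': "b' \<in> topspace B" "g b' = g b" using someI_ex[OF ex] by (simp_all add: b'_def)
  show ?thesis
  proof (cases "b' = b")
    case True then show ?thesis by (simp add: dsc_def b'_def[symmetric])
  next
    case False
    then have "b' \<in> f ` topspace A \<and> b \<in> f ` topspace A" using fib[OF b'(1) b b'(2)] by blast
    then show ?thesis using assms(1) by (auto simp: dsc_def b'_def[symmetric])
  qed
qed

lemma HP_from_B:
  assumes K: "continuous_map (prod_topology unitI B) (SPS m) K"
    and Kf: "\<And>t x. t \<in> {0..1} \<Longrightarrow> x \<in> topspace A \<Longrightarrow> K (t, f x) = {#}"
    and K0: "\<And>b. b \<in> topspace B \<Longrightarrow> K (0, b) = \<beta> (g b)"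
    and K1: "\<And>b. b \<in> topspace B \<Longrightarrow> K (1, b) = \<beta>' (g b)"
  shows "HP C c0 m \<beta> \<beta>'"
proof -
  have Q: "quotient_map (prod_topology unitI B) (prod_topology unitI C) (\<lambda>(t,b). (t, g b))"
    by (rule quotient_map_prod_right[OF unitI_lc disjI1[OF unitI_H] gq])
  have resp: "K p = K p'" if "p \<in> topspace (prod_topology unitI B)" "p' \<in> topspace (prod_topology unitI B)"
    "(\<lambda>(t,b). (t, g b)) p = (\<lambda>(t,b). (t, g b)) p'" for p p'
  proof -
    obtain t b t' b' where p: "p = (t,b)" "p' = (t',b')" by fastforce
    have tb: "t \<in> {0..1}" "b \<in> topspace B" "b' \<in> topspace B" "t' = t" "g b = g b'" using that p by auto
    show ?thesis
    proof (cases "b = b'")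
      case True then show ?thesis using p tb by simp
    next
      case False
      then have "b \<in> f ` topspace A \<and> b' \<in> f ` topspace A" using fib[OF tb(2) tb(3) tb(5)] by blast
      then show ?thesis using p tb Kf by auto
    qed
  qed
  have cond: "\<And>x y. \<lbrakk>x \<in> topspace (prod_topology unitI B); y \<in> topspace (prod_topology unitI B);
       (\<lambda>(t,b). (t, g b)) x = (\<lambda>(t,b). (t, g b)) y\<rbrakk> \<Longrightarrow> K x = K y"
    by (rule resp)
  have "\<exists>L. continuous_map (prod_topology unitI C) (SPS m) L \<and>
      (\<forall>p\<in>topspace (prod_topology unitI B). L ((\<lambda>(t,b). (t, g b)) p) = K p)"
    by (rule quotient_map_lift_exists[OF Q K]) (auto intro: cond)
  then obtain L where L: "continuous_map (prod_topology unitI C) (SPS m) L"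
    and Leq: "\<And>p. p \<in> topspace (prod_topology unitI B) \<Longrightarrow> L ((\<lambda>(t,b). (t, g b)) p) = K p"
    by blast
  define L' where "L' = (\<lambda>(t,c). if c \<in> topspace C then L (t,c) else if t = 0 then \<beta> c else \<beta>' c)"
  have L'c: "continuous_map (prod_topology unitI C) (SPS m) L'"
    by (rule continuous_map_eq[OF L]) (auto simp: L'_def)
  have Lg: "L (t, g b) = K (t, b)" if "t \<in> {0..1}" "b \<in> topspace B" for t b
    using Leq[of "(t,b)"] that by simp
  show ?thesis
    unfolding homotopic_with_def
  proof (intro exI conjI allI ballI)
    show "continuous_map (prod_topology unitI C) (SPS m) L'" by (rule L'c)
    fix c
    show "L' (0, c) = \<beta> c"
    proof (cases "c \<in> topspace C")
      case True
      then obtain b where "b \<in> topspace B" "g b = c" using gsurj by blast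
      then show ?thesis using Lg[of 0 b] K0 by (auto simp: L'_def)
    qed (simp add: L'_def)
    show "L' (1, c) = \<beta>' c"
    proof (cases "c \<in> topspace C")
      case True
      then obtain b where "b \<in> topspace B" "g b = c" using gsurj by blast
      then show ?thesis using Lg[of 1 b] K1 by (auto simp: L'_def)
    qed (simp add: L'_def)
  next
    fix t :: real assume t: "t \<in> {0..1}"
    have "L' (t, c0) = L (t, g b0)" using c0C gb0 by (simp add: L'_def)
    also have "\<dots> = K (t, f a0)" using Lg[OF t b0B] fa0 by simp
    also have "\<dots> = {#}" using Kf[OF t a0A] .
    finally show "(\<lambda>x. L' (t, x)) c0 = {#}" by simp
  qed
qed

end


lemma zc_Gm_eq:
  assumes compat: "\<And>x s. x \<in> topspace A \<Longrightarrow> s \<in> {0..1} \<Longrightarrow> s = 0 \<or> x = a0 \<Longrightarrow> ha (x,s) = hb (f x)"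
    and p: "p \<in> topspace (prod_topology A unitI)"
  shows "zc hb ha (Gm a0 f p) = ha p"
proof -
  obtain x s where xs: "p = (x,s)" "x \<in> topspace A" "s \<in> {0..1}" using p by auto
  show ?thesis using compat[OF xs(2) xs(3)] by (auto simp: xs(1) zc_Gm)
qed

lemma cont_zc:
  assumes hb: "continuous_map B W hb" and ha: "continuous_map (prod_topology A unitI) W ha"
    and compat: "\<And>x s. x \<in> topspace A \<Longrightarrow> s \<in> {0..1} \<Longrightarrow> s = 0 \<or> x = a0 \<Longrightarrow> ha (x,s) = hb (f x)"
  shows "continuous_map (Zfin A a0 B f) W (zc hb ha)"
proof (rule cont_from_Zfin)
  show "continuous_map B W (zc hb ha \<circ> jB)" using hb by (simp add: o_def)
  show "continuous_map (prod_topology A unitI) W (zc hb ha \<circ> Gm a0 f)"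
    by (rule continuous_map_eq[OF ha]) (use zc_Gm_eq[of A a0 ha hb f, OF compat] in auto)
qed

lemma cont_zc_t:
  assumes hb: "continuous_map (prod_topology unitI B) W (\<lambda>(t,b). hb t b)"
    and ha: "continuous_map (prod_topology unitI (prod_topology A unitI)) W (\<lambda>(t,p). ha t p)"
    and compat: "\<And>t x s. t \<in> {0..1} \<Longrightarrow> x \<in> topspace A \<Longrightarrow> s \<in> {0..1} \<Longrightarrow> s = 0 \<or> x = a0 \<Longrightarrow> ha t (x,s) = hb t (f x)"
  shows "continuous_map (prod_topology unitI (Zfin A a0 B f)) W (\<lambda>(t,z). zc (hb t) (ha t) z)"
proof (rule cont_from_Zfin_prod)
  show "continuous_map (prod_topology unitI B) W (\<lambda>(t, b). (\<lambda>(t,z). zc (hb t) (ha t) z) (t, jB b))"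
    using hb by simp
  show "continuous_map (prod_topology unitI (prod_topology A unitI)) W (\<lambda>(t, p). (\<lambda>(t,z). zc (hb t) (ha t) z) (t, Gm a0 f p))"
  proof (rule continuous_map_eq[OF ha])
    fix tp assume tp: "tp \<in> topspace (prod_topology unitI (prod_topology A unitI))"
    obtain t p where "tp = (t,p)" "t \<in> {0..1}" "p \<in> topspace (prod_topology A unitI)" using tp by auto
    then show "(\<lambda>(t,p). ha t p) tp = (\<lambda>(t, p). (\<lambda>(t,z). zc (hb t) (ha t) z) (t, Gm a0 f p)) tp"
      using zc_Gm_eq[of A a0 "ha t" "hb t" f p] compat by auto
  qed
qed

lemma Ztop:
  assumes "z \<in> topspace (Zfin A a0 B f)"
  shows "(\<exists>b\<in>topspace B. z = jB b) \<or> (\<exists>x s. x \<in> topspace A \<and> s \<in> {0..1} \<and> z = Gm a0 f (x,s))"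
proof -
  from assms have "z \<in> jB ` topspace B \<or> z \<in> Gm a0 f ` topspace (prod_topology A unitI)"
    by (simp add: topspace_Zfin carZ_def)
  then show ?thesis
  proof
    assume "z \<in> jB ` topspace B" then show ?thesis by blast
  next
    assume "z \<in> Gm a0 f ` topspace (prod_topology A unitI)"
    then obtain p where p: "p \<in> topspace (prod_topology A unitI)" "z = Gm a0 f p" by blast
    obtain x s where "p = (x,s)" by fastforce
    with p show ?thesis by auto
  qed
qed

lemma cont_H1:
  assumes Hc: "continuous_map (prod_topology B unitI) Z H"
  shows "continuous_map (prod_topology unitI B) (prod_topology unitI Z) (\<lambda>(t,b). (t, H (b,1)))"
proof -
  have "continuous_map (prod_topology unitI B) (prod_topology B unitI) (\<lambda>p. (snd p, 1))"
    by (auto intro!: continuous_map_pairedI continuous_map_snd simp: continuous_map_const)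
  from continuous_map_compose[OF this Hc] have "continuous_map (prod_topology unitI B) Z (\<lambda>p. H (snd p, 1))"
    by (simp add: o_def)
  then show ?thesis
    by (auto simp: case_prod_unfold intro!: continuous_map_pairedI continuous_map_fst)
qed

lemma cont_Hswap:
  assumes Hc: "continuous_map (prod_topology B unitI) Z H"
  shows "continuous_map (prod_topology unitI B) Z (\<lambda>(t,b). H (b,t))"
proof -
  have "continuous_map (prod_topology unitI B) (prod_topology B unitI) (\<lambda>p. (snd p, fst p))"
    by (auto intro!: continuous_map_pairedI continuous_map_snd continuous_map_fst)
  from continuous_map_compose[OF this Hc] show ?thesis by (simp add: o_def case_prod_unfold)
qed

context
  fixes A :: "'a topology" and a0 :: 'a and B :: "'b topology" and b0 :: 'b
    and C :: "'c topology" and c0 :: 'c and f :: "'a \<Rightarrow> 'b" and g :: "'b \<Rightarrow> 'c"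
  assumes seq: "based_cofib_seq A a0 B b0 C c0 f g"
begin

lemmas sa0A = a0A[OF seq] and sfc = fc[OF seq] and sfa0 = fa0[OF seq] and sgq = gq[OF seq]
  and sgc = gc[OF seq] and sgb0 = gb0[OF seq] and sgf = gf[OF seq] and sb0B = b0B[OF seq]
  and sc0C = c0C[OF seq] and sfib = fib[OF seq] and sHEP = HEP[OF seq]
  and sdsc_eq = dsc_eq[OF seq] and sHP_from_B = HP_from_B[OF seq]

lemma conn_exists:
  assumes a: "cocycle A a0 n \<alpha>"
  shows "\<exists>\<beta>. cocycle C c0 (Suc n) \<beta> \<and> conn_rel A a0 B b0 f g n \<alpha> \<beta>"
proof -
  have ac: "continuous_map A (SPS n) \<alpha>" and aa0: "\<alpha> a0 = {#}" using a by (auto simp: cocycle_def based_map_def)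
  obtain H where Hc: "continuous_map (prod_topology B unitI) (Zfin A a0 B f) H"
    and H0: "\<forall>b\<in>topspace B. H (b,0) = jB b"
    and Hf: "\<forall>x\<in>topspace A. \<forall>t\<in>{0..1}. H (f x, t) = Gm a0 f (x,t)"
    and Hb0: "\<forall>t\<in>{0..1}. H (b0, t) = jB b0"
    using sHEP by blast
  define \<Psi> :: "('a + 'b) \<times> real \<Rightarrow> (nat \<Rightarrow> real) option multiset" where "\<Psi> = zc (\<lambda>_. {#}) (susp_cocycle n \<alpha>)"
  have compat: "susp_cocycle n \<alpha> (x,s) = (\<lambda>_. {#}) (f x)" if "s = 0 \<or> x = a0" for x s
    using that aa0 by (auto simp: susp_empty)
  have c\<Psi>: "continuous_map (Zfin A a0 B f) (SPS (Suc n)) \<Psi>"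
    unfolding \<Psi>_def by (rule cont_zc) (auto simp: continuous_map_const intro: cont_susp_cocycle[OF ac] compat)
  have \<Psi>G: "\<Psi> (Gm a0 f p) = susp_cocycle n \<alpha> p" if "p \<in> topspace (prod_topology A unitI)" for p
    unfolding \<Psi>_def by (rule zc_Gm_eq[OF _ that]) (rule compat, auto)
  define \<phi> where "\<phi> = (\<lambda>b. \<Psi> (H (b,1)))"
  have c\<phi>: "continuous_map B (SPS (Suc n)) \<phi>"
  proof -
    have "continuous_map B (prod_topology B unitI) (\<lambda>b. (b,1))"
      by (auto intro!: continuous_map_pairedI simp: continuous_map_const)
    from continuous_map_compose[OF continuous_map_compose[OF this Hc] c\<Psi>] show ?thesis
      by (simp add: \<phi>_def o_def)
  qed
  have \<phi>f: "\<phi> (f x) = {#}" if "x \<in> topspace A" for x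
    using that Hf \<Psi>G[of "(x,1)"] by (simp add: \<phi>_def)
  have cond: "\<phi> b = \<phi> b'" if "b \<in> topspace B" "b' \<in> topspace B" "g b = g b'" for b b'
  proof (cases "b = b'")
    case False
    then show ?thesis using sfib[OF that] \<phi>f by auto
  qed simp
  have "\<exists>\<beta>. continuous_map C (SPS (Suc n)) \<beta> \<and> (\<forall>b\<in>topspace B. \<beta> (g b) = \<phi> b)"
    by (rule quotient_map_lift_exists[OF sgq c\<phi>]) (auto intro: cond)
  then obtain \<beta> where \<beta>c: "continuous_map C (SPS (Suc n)) \<beta>" and \<beta>g: "\<And>b. b \<in> topspace B \<Longrightarrow> \<beta> (g b) = \<phi> b"
    by blast
  have \<Psi>jB: "\<Psi> (jB b) = {#}" for b by (simp add: \<Psi>_def)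
  have \<beta>0: "\<beta> c0 = {#}"
    using \<beta>g[OF sb0B] sgb0 Hb0 \<Psi>jB by (simp add: \<phi>_def)
  define HB where "HB = (\<lambda>(b,t). \<Psi> (H (b, 1 - t)))"
  define HA where "HA = (\<lambda>((x,s),t). susp_cocycle n \<alpha> (x, s + (1 - s) * (1 - t)))"
  have cHB: "continuous_map (prod_topology B unitI) (SPS (Suc n)) HB"
  proof -
    from continuous_map_compose[OF continuous_map_compose[OF cont_flip Hc] c\<Psi>] show ?thesis
      by (simp add: HB_def o_def case_prod_unfold)
  qed
  have cHA: "continuous_map (prod_topology (prod_topology A unitI) unitI) (SPS (Suc n)) HA"
  proof -
    have r: "continuous_map (prod_topology (prod_topology A unitI) unitI) unitI (\<lambda>p. snd (fst p) + (1 - snd (fst p)) * (1 - snd p))"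
    proof (rule cont_unit_real)
      have s: "continuous_map (prod_topology (prod_topology A unitI) unitI) euclideanreal (\<lambda>p. snd (fst p))"
        using continuous_map_compose[OF continuous_map_fst continuous_map_snd] by (intro cont_eu_of_unit) (simp add: o_def)
      have t: "continuous_map (prod_topology (prod_topology A unitI) unitI) euclideanreal (\<lambda>p. snd p)"
        by (intro cont_eu_of_unit continuous_map_snd)
      show "continuous_map (prod_topology (prod_topology A unitI) unitI) euclideanreal (\<lambda>p. snd (fst p) + (1 - snd (fst p)) * (1 - snd p))"
        by (intro continuous_map_add continuous_map_real_mult continuous_map_diff s t continuous_map_const[THEN iffD2]) auto
    next
      fix p assume "p \<in> topspace (prod_topology (prod_topology A unitI) unitI)"
      then have st: "0 \<le> snd (fst p)" "snd (fst p) \<le> 1" "0 \<le> snd p" "snd p \<le> 1" by auto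
      have "0 \<le> (1 - snd (fst p)) * (1 - snd p)" using st by simp
      moreover have "(1 - snd (fst p)) * (1 - snd p) \<le> 1 - snd (fst p)"
        using st by (intro mult_left_le) auto
      ultimately show "snd (fst p) + (1 - snd (fst p)) * (1 - snd p) \<in> {0..1}" using st by auto
    qed
    have m: "continuous_map (prod_topology (prod_topology A unitI) unitI) (prod_topology A unitI)
               (\<lambda>p. (fst (fst p), snd (fst p) + (1 - snd (fst p)) * (1 - snd p)))"
      using r by (auto intro!: continuous_map_pairedI
          continuous_map_compose[OF continuous_map_fst continuous_map_fst, unfolded o_def])
    from continuous_map_compose[OF m cont_susp_cocycle[OF ac]] show ?thesis
      by (simp add: HA_def o_def case_prod_unfold)
  qed
  have "conn_rel A a0 B b0 f g n \<alpha> \<beta>"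
    unfolding conn_rel_def
  proof (intro exI conjI ballI)
    show "continuous_map (prod_topology B unitI) (SPS (Suc n)) HB" by (rule cHB)
    show "continuous_map (prod_topology (prod_topology A unitI) unitI) (SPS (Suc n)) HA" by (rule cHA)
    fix b assume b: "b \<in> topspace B"
    show "HB (b, 0) = \<beta> (g b)" using \<beta>g[OF b] by (simp add: HB_def \<phi>_def)
    show "HB (b, 1) = {#}" using H0 b \<Psi>jB by (simp add: HB_def)
  next
    fix t :: real assume t: "t \<in> {0..1}"
    then have "1 - t \<in> {0..1}" by auto
    then show "HB (b0, t) = {#}" using Hb0 \<Psi>jB by (simp add: HB_def)
  next
    fix x and s :: real assume x: "x \<in> topspace A" and s: "s \<in> {0..1}"
    show "HA ((x, s), 0) = {#}" by (simp add: HA_def)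
    show "HA ((x, s), 1) = susp_cocycle n \<alpha> (x, s)" by (simp add: HA_def)
  next
    fix x and t :: real assume x: "x \<in> topspace A" and t: "t \<in> {0..1}"
    then have t': "1 - t \<in> {0..1}" by auto
    have "HB (f x, t) = \<Psi> (Gm a0 f (x, 1 - t))" using Hf x t' by (simp add: HB_def)
    also have "\<dots> = susp_cocycle n \<alpha> (x, 1 - t)" using \<Psi>G[of "(x, 1 - t)"] x t' by simp
    finally show "HA ((x, 0), t) = HB (f x, t)" by (simp add: HA_def)
    show "HA ((x, 1), t) = {#}" by (simp add: HA_def)
  next
    fix s t :: real
    show "HA ((a0, s), t) = {#}" using aa0 by (simp add: HA_def susp_empty)
  qed
  moreover have "cocycle C c0 (Suc n) \<beta>" using \<beta>c \<beta>0 by (simp add: cocycle_def based_map_def)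
  ultimately show ?thesis by blast
qed

end


context
  fixes A :: "'a topology" and a0 :: 'a and B :: "'b topology" and b0 :: 'b
    and C :: "'c topology" and c0 :: 'c and f :: "'a \<Rightarrow> 'b" and g :: "'b \<Rightarrow> 'c"
  assumes seq: "based_cofib_seq A a0 B b0 C c0 f g"
begin

lemmas usa0A = a0A[OF seq] and usfc = fc[OF seq] and usfa0 = fa0[OF seq] and usgq = gq[OF seq]
  and usgc = gc[OF seq] and usgb0 = gb0[OF seq] and usgf = gf[OF seq] and usb0B = b0B[OF seq]
  and usc0C = c0C[OF seq] and usfib = fib[OF seq] and usHEP = HEP[OF seq]
  and usdsc_eq = dsc_eq[OF seq] and usHP_from_B = HP_from_B[OF seq]

lemma conn_half:
  assumes cr: "conn_rel A a0 B b0 f g n \<alpha> \<beta>" and bc: "cocycle C c0 (Suc n) \<beta>"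
    and Hc: "continuous_map (prod_topology B unitI) (Zfin A a0 B f) H"
    and H0: "\<forall>b\<in>topspace B. H (b,0) = jB b"
    and Hf: "\<forall>x\<in>topspace A. \<forall>t\<in>{0..1}. H (f x, t) = Gm a0 f (x,t)"
  shows "HP C c0 (Suc n) \<beta> (dsc B g (\<lambda>b. zc (\<lambda>_. {#}) (susp_cocycle n \<alpha>) (H (b,1))))"
proof -
  obtain HB HA where
    cHB: "continuous_map (prod_topology B unitI) (SPS (Suc n)) HB" and
    cHA: "continuous_map (prod_topology (prod_topology A unitI) unitI) (SPS (Suc n)) HA" and
    HB01: "\<forall>b\<in>topspace B. HB (b, 0) = \<beta> (g b) \<and> HB (b, 1) = {#}" and
    HBb0: "\<forall>t\<in>{0..1}. HB (b0, t) = {#}" and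
    HA01: "\<forall>x\<in>topspace A. \<forall>s\<in>{0..1}. HA ((x, s), 0) = {#} \<and> HA ((x, s), 1) = susp_cocycle n \<alpha> (x, s)" and
    HAx: "\<forall>x\<in>topspace A. \<forall>t\<in>{0..1}. HA ((x, 0), t) = HB (f x, t) \<and> HA ((x, 1), t) = {#}" and
    HAa: "\<forall>s\<in>{0..1}. \<forall>t\<in>{0..1}. HA ((a0, s), t) = {#}"
    using cr unfolding conn_rel_def by blast
  have \<beta>c: "continuous_map C (SPS (Suc n)) \<beta>" and \<beta>0: "\<beta> c0 = {#}"
    using bc by (auto simp: cocycle_def based_map_def)
  define qz :: "('a + 'b) \<times> real \<Rightarrow> 'c" where "qz = zc g (\<lambda>_. c0)"
  have cqz: "continuous_map (Zfin A a0 B f) C qz"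
    unfolding qz_def by (rule cont_zc[OF usgc]) (auto simp: continuous_map_const usc0C usgf)
  have qzG: "qz (Gm a0 f (x,t)) = c0" if "x \<in> topspace A" for x t
    using that usgf by (simp add: qz_def zc_Gm)
  define \<phi>1 where "\<phi>1 = (\<lambda>b. \<beta> (qz (H (b,1))))"
  define \<phi>2 where "\<phi>2 = (\<lambda>b. zc (\<lambda>_. {#}) (susp_cocycle n \<alpha>) (H (b,1)))"
  have \<phi>1f: "\<phi>1 (f x) = {#}" if "x \<in> topspace A" for x
    using that Hf qzG \<beta>0 by (simp add: \<phi>1_def)
  have \<phi>2f: "\<phi>2 (f x) = {#}" if "x \<in> topspace A" for x
    using that Hf by (simp add: \<phi>2_def zc_Gm)
  have step1: "HP C c0 (Suc n) \<beta> (dsc B g \<phi>1)"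
  proof (rule usHP_from_B)
    have "continuous_map (prod_topology unitI B) C (qz \<circ> (\<lambda>(t,b). H (b,t)))"
      by (rule continuous_map_compose[OF cont_Hswap[OF Hc] cqz])
    from continuous_map_compose[OF this \<beta>c]
    show "continuous_map (prod_topology unitI B) (SPS (Suc n)) (\<lambda>(t,b). \<beta> (qz (H (b,t))))"
      by (simp add: o_def case_prod_unfold)
    fix t :: real and x assume "t \<in> {0..1}" "x \<in> topspace A"
    then show "(\<lambda>(t,b). \<beta> (qz (H (b,t)))) (t, f x) = {#}" using Hf qzG \<beta>0 by simp
  next
    fix b assume b: "b \<in> topspace B"
    show "(\<lambda>(t,b). \<beta> (qz (H (b,t)))) (0, b) = \<beta> (g b)" using H0 b by (simp add: qz_def)
    show "(\<lambda>(t,b). \<beta> (qz (H (b,t)))) (1, b) = dsc B g \<phi>1 (g b)"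
      using usdsc_eq[of \<phi>1 "{#}" b, OF \<phi>1f b] by (simp add: \<phi>1_def)
  qed
  define \<Phi> where "\<Phi> = (\<lambda>(t::real, z). zc (\<lambda>b. HB (b,t)) (\<lambda>p. HA (p,t)) z)"
  have c\<Phi>: "continuous_map (prod_topology unitI (Zfin A a0 B f)) (SPS (Suc n)) \<Phi>"
    unfolding \<Phi>_def
  proof (rule cont_zc_t)
    show "continuous_map (prod_topology unitI B) (SPS (Suc n)) (\<lambda>(t, b). HB (b, t))"
      by (rule cont_Hswap[OF cHB])
    show "continuous_map (prod_topology unitI (prod_topology A unitI)) (SPS (Suc n)) (\<lambda>(t, p). HA (p, t))"
      by (rule cont_Hswap[OF cHA])
    fix t :: real and x and s :: real assume "t \<in> {0..1}" "x \<in> topspace A" "s \<in> {0..1}" "s = 0 \<or> x = a0"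
    then show "HA ((x, s), t) = HB (f x, t)" using HAx HAa HBb0 usfa0 by auto
  qed
  have \<Phi>0: "\<Phi> (0, z) = \<beta> (qz z)" if "z \<in> topspace (Zfin A a0 B f)" for z
    using Ztop[OF that]
  proof
    assume "\<exists>b\<in>topspace B. z = jB b"
    then show ?thesis using HB01 by (auto simp: \<Phi>_def qz_def)
  next
    assume "\<exists>x s. x \<in> topspace A \<and> s \<in> {0..1} \<and> z = Gm a0 f (x, s)"
    then obtain x s where xs: "x \<in> topspace A" "s \<in> {0..1}" "z = Gm a0 f (x, s)" by blast
    then have fx: "f x \<in> topspace B" using cm_in[OF usfc] by blast
    show ?thesis using xs HB01 fx HA01 \<beta>0 usgf by (auto simp: \<Phi>_def qz_def zc_Gm)
  qed
  have \<Phi>1: "\<Phi> (1, z) = zc (\<lambda>_. {#}) (susp_cocycle n \<alpha>) z" if "z \<in> topspace (Zfin A a0 B f)" for z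
    using Ztop[OF that]
  proof
    assume "\<exists>b\<in>topspace B. z = jB b"
    then show ?thesis using HB01 by (auto simp: \<Phi>_def)
  next
    assume "\<exists>x s. x \<in> topspace A \<and> s \<in> {0..1} \<and> z = Gm a0 f (x, s)"
    then obtain x s where xs: "x \<in> topspace A" "s \<in> {0..1}" "z = Gm a0 f (x, s)" by blast
    then have fx: "f x \<in> topspace B" using cm_in[OF usfc] by blast
    show ?thesis using xs HB01 fx HA01 by (auto simp: \<Phi>_def zc_Gm)
  qed
  have Hin: "H (b,1) \<in> topspace (Zfin A a0 B f)" if "b \<in> topspace B" for b
    using cm_in[OF Hc, of "(b,1)"] that by simp
  have step2: "HP C c0 (Suc n) (dsc B g \<phi>1) (dsc B g \<phi>2)"
  proof (rule usHP_from_B)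
    from continuous_map_compose[OF cont_H1[OF Hc] c\<Phi>]
    show "continuous_map (prod_topology unitI B) (SPS (Suc n)) (\<lambda>(t,b). \<Phi> (t, H (b,1)))"
      by (simp add: o_def case_prod_unfold)
    fix t :: real and x assume t: "t \<in> {0..1}" and x: "x \<in> topspace A"
    show "(\<lambda>(t,b). \<Phi> (t, H (b,1))) (t, f x) = {#}"
      using t x Hf HAx HBb0 usfa0 by (auto simp: \<Phi>_def zc_Gm)
  next
    fix b assume b: "b \<in> topspace B"
    show "(\<lambda>(t,b). \<Phi> (t, H (b,1))) (0, b) = dsc B g \<phi>1 (g b)"
      using \<Phi>0[OF Hin[OF b]] usdsc_eq[of \<phi>1 "{#}" b, OF \<phi>1f b] by (simp add: \<phi>1_def)
    show "(\<lambda>(t,b). \<Phi> (t, H (b,1))) (1, b) = dsc B g \<phi>2 (g b)"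
      using \<Phi>1[OF Hin[OF b]] usdsc_eq[of \<phi>2 "{#}" b, OF \<phi>2f b] by (simp add: \<phi>2_def)
  qed
  show ?thesis using homotopic_with_trans[OF step1 step2] by (simp add: \<phi>2_def)
qed

lemma conn_mid:
  assumes h: "HP A a0 n \<alpha> \<alpha>'"
    and Hc: "continuous_map (prod_topology B unitI) (Zfin A a0 B f) H"
    and Hf: "\<forall>x\<in>topspace A. \<forall>t\<in>{0..1}. H (f x, t) = Gm a0 f (x,t)"
  shows "HP C c0 (Suc n) (dsc B g (\<lambda>b. zc (\<lambda>_. {#}) (susp_cocycle n \<alpha>) (H (b,1))))
                         (dsc B g (\<lambda>b. zc (\<lambda>_. {#}) (susp_cocycle n \<alpha>') (H (b,1))))"
proof -
  obtain k where kc: "continuous_map (prod_topology unitI A) (SPS n) k"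
    and k0: "\<forall>x. k (0, x) = \<alpha> x" and k1: "\<forall>x. k (1, x) = \<alpha>' x"
    and ka: "\<forall>t\<in>{0..1}. k (t, a0) = {#}"
    using h unfolding homotopic_with_def by auto
  have k0': "(\<lambda>x. k (0,x)) = \<alpha>" and k1': "(\<lambda>x. k (1,x)) = \<alpha>'" using k0 k1 by auto
  define \<Phi> :: "real \<times> ('a + 'b) \<times> real \<Rightarrow> (nat \<Rightarrow> real) option multiset"
    where "\<Phi> = (\<lambda>(t::real, z). zc (\<lambda>_. {#}) (\<lambda>p. susp_cocycle n (\<lambda>x. k (t,x)) p) z)"
  have c\<Phi>: "continuous_map (prod_topology unitI (Zfin A a0 B f)) (SPS (Suc n)) \<Phi>"
    unfolding \<Phi>_def
  proof (rule cont_zc_t)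
    show "continuous_map (prod_topology unitI B) (SPS (Suc n)) (\<lambda>(t, b). {#})"
      by (simp add: continuous_map_const case_prod_unfold)
    show "continuous_map (prod_topology unitI (prod_topology A unitI)) (SPS (Suc n)) (\<lambda>(t, p). susp_cocycle n (\<lambda>x. k (t, x)) p)"
      by (rule cont_susp_hom[OF kc])
    fix t :: real and x and s :: real assume "t \<in> {0..1}" "x \<in> topspace A" "s \<in> {0..1}" "s = 0 \<or> x = a0"
    then show "susp_cocycle n (\<lambda>x. k (t, x)) (x, s) = {#}" using ka by (auto simp: susp_empty)
  qed
  define \<phi>2 where "\<phi>2 = (\<lambda>b. zc (\<lambda>_. {#}) (susp_cocycle n \<alpha>) (H (b,1)))"
  define \<phi>3 where "\<phi>3 = (\<lambda>b. zc (\<lambda>_. {#}) (susp_cocycle n \<alpha>') (H (b,1)))"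
  have \<phi>2f: "\<phi>2 (f x) = {#}" if "x \<in> topspace A" for x
    using that Hf by (simp add: \<phi>2_def zc_Gm)
  have \<phi>3f: "\<phi>3 (f x) = {#}" if "x \<in> topspace A" for x
    using that Hf by (simp add: \<phi>3_def zc_Gm)
  have "HP C c0 (Suc n) (dsc B g \<phi>2) (dsc B g \<phi>3)"
  proof (rule usHP_from_B)
    from continuous_map_compose[OF cont_H1[OF Hc] c\<Phi>]
    show "continuous_map (prod_topology unitI B) (SPS (Suc n)) (\<lambda>(t,b). \<Phi> (t, H (b,1)))"
      by (simp add: o_def case_prod_unfold)
    fix t :: real and x assume t: "t \<in> {0..1}" and x: "x \<in> topspace A"
    show "(\<lambda>(t,b). \<Phi> (t, H (b,1))) (t, f x) = {#}"
      using t x Hf by (auto simp: \<Phi>_def zc_Gm)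
  next
    fix b assume b: "b \<in> topspace B"
    show "(\<lambda>(t,b). \<Phi> (t, H (b,1))) (0, b) = dsc B g \<phi>2 (g b)"
      using usdsc_eq[of \<phi>2 "{#}" b, OF \<phi>2f b] k0' by (simp add: \<phi>2_def \<Phi>_def)
    show "(\<lambda>(t,b). \<Phi> (t, H (b,1))) (1, b) = dsc B g \<phi>3 (g b)"
      using usdsc_eq[of \<phi>3 "{#}" b, OF \<phi>3f b] k1' by (simp add: \<phi>3_def \<Phi>_def)
  qed
  then show ?thesis by (simp add: \<phi>2_def \<phi>3_def)
qed

lemma conn_unique:
  assumes cr: "conn_rel A a0 B b0 f g n \<alpha> \<beta>" and bc: "cocycle C c0 (Suc n) \<beta>"
    and cr': "conn_rel A a0 B b0 f g n \<alpha>' \<beta>'" and bc': "cocycle C c0 (Suc n) \<beta>'"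
    and h: "HP A a0 n \<alpha> \<alpha>'"
  shows "HP C c0 (Suc n) \<beta> \<beta>'"
proof -
  obtain H where Hc: "continuous_map (prod_topology B unitI) (Zfin A a0 B f) H"
    and H0: "\<forall>b\<in>topspace B. H (b,0) = jB b"
    and Hf: "\<forall>x\<in>topspace A. \<forall>t\<in>{0..1}. H (f x, t) = Gm a0 f (x,t)"
    using usHEP by blast
  have 1: "HP C c0 (Suc n) \<beta> (dsc B g (\<lambda>b. zc (\<lambda>_. {#}) (susp_cocycle n \<alpha>) (H (b,1))))"
    by (rule conn_half[OF cr bc Hc H0 Hf])
  have 2: "HP C c0 (Suc n) \<beta>' (dsc B g (\<lambda>b. zc (\<lambda>_. {#}) (susp_cocycle n \<alpha>') (H (b,1))))"
    by (rule conn_half[OF cr' bc' Hc H0 Hf])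
  have 3: "HP C c0 (Suc n) (dsc B g (\<lambda>b. zc (\<lambda>_. {#}) (susp_cocycle n \<alpha>) (H (b,1))))
                         (dsc B g (\<lambda>b. zc (\<lambda>_. {#}) (susp_cocycle n \<alpha>') (H (b,1))))"
    by (rule conn_mid[OF h Hc Hf])
  show ?thesis
    by (rule homotopic_with_trans[OF homotopic_with_trans[OF 1 3] homotopic_with_symD[OF 2]])
qed

end


lemma sp_ext_cong: "(\<And>q. q \<in># M \<Longrightarrow> \<phi> q = \<psi> q) \<Longrightarrow> sp_ext \<phi> M = sp_ext \<psi> M"
  unfolding sp_ext_def by (metis image_mset_cong)

lemma sp_ext_zero: "(\<And>q. q \<in># M \<Longrightarrow> \<phi> q = {#}) \<Longrightarrow> sp_ext \<phi> M = {#}"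
  by (induct M) auto

lemma SPmap_sp_ext: "SPmap e h (sp_ext \<alpha> M) = sp_ext (\<lambda>p. SPmap e h (\<alpha> p)) M"
  by (induct M) auto

lemma carrier_mem: "M \<in> sp_carrier X e \<Longrightarrow> q \<in># M \<Longrightarrow> q \<in> topspace X"
  by (auto simp: sp_carrier_def)

lemma based_in: "based_map X x0 Y y0 u \<Longrightarrow> x \<in> topspace X \<Longrightarrow> u x \<in> topspace Y"
  by (auto simp: based_map_def intro: cm_in)

lemma II_lc: "locally_compact_space (prod_topology unitI unitI)"
  by (metis locally_compact_space_prod_topology unitI_lc)

lemma II_H: "Hausdorff_space (prod_topology unitI unitI)"
  by (metis Hausdorff_space_prod_topology unitI_H)

lemma conn_natural:
  assumes seq1: "based_cofib_seq A1 x1 B1 y1 C1 z1 f1 g1"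
    and seq2: "based_cofib_seq A2 x2 B2 y2 C2 z2 f2 g2"
    and a: "based_map A1 x1 (SP A2 x2) {#} a"
    and bm: "based_map B1 y1 (SP B2 y2) {#} bm"
    and c: "based_map C1 z1 (SP C2 z2) {#} c"
    and bf: "\<forall>x\<in>topspace A1. bm (f1 x) = SPmap y2 f2 (a x)"
    and cg: "\<forall>y\<in>topspace B1. c (g1 y) = SPmap z2 g2 (bm y)"
    and cr: "conn_rel A2 x2 B2 y2 f2 g2 n \<alpha> \<beta>" and bc: "cocycle C2 z2 (Suc n) \<beta>"
  shows "conn_rel A1 x1 B1 y1 f1 g1 n (sp_ext \<alpha> \<circ> a) (sp_ext \<beta> \<circ> c)"
proof -
  obtain HB HA where
    cHB: "continuous_map (prod_topology B2 unitI) (SPS (Suc n)) HB" and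
    cHA: "continuous_map (prod_topology (prod_topology A2 unitI) unitI) (SPS (Suc n)) HA" and
    HB01: "\<forall>b\<in>topspace B2. HB (b, 0) = \<beta> (g2 b) \<and> HB (b, 1) = {#}" and
    HBb0: "\<forall>t\<in>{0..1}. HB (y2, t) = {#}" and
    HA01: "\<forall>x\<in>topspace A2. \<forall>s\<in>{0..1}. HA ((x, s), 0) = {#} \<and> HA ((x, s), 1) = susp_cocycle n \<alpha> (x, s)" and
    HAx: "\<forall>x\<in>topspace A2. \<forall>t\<in>{0..1}. HA ((x, 0), t) = HB (f2 x, t) \<and> HA ((x, 1), t) = {#}" and
    HAa: "\<forall>s\<in>{0..1}. \<forall>t\<in>{0..1}. HA ((x2, s), t) = {#}"
    using cr unfolding conn_rel_def by blast
  have x2A: "x2 \<in> topspace A2" by (rule a0A[OF seq2])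
  have y2B: "y2 \<in> topspace B2" by (rule b0B[OF seq2])
  have x1A: "x1 \<in> topspace A1" by (rule a0A[OF seq1])
  have y1B: "y1 \<in> topspace B1" by (rule b0B[OF seq1])
  have \<beta>0: "\<beta> z2 = {#}" using bc by (simp add: cocycle_def based_map_def)
  have ac: "continuous_map A1 (SP A2 x2) a" and ax1: "a x1 = {#}" using a by (auto simp: based_map_def)
  have bc': "continuous_map B1 (SP B2 y2) bm" and by1: "bm y1 = {#}" using bm by (auto simp: based_map_def)
  define HB1 where "HB1 = (\<lambda>(b,t). sp_ext (\<lambda>q. HB (q,t)) (bm b))"
  define HA1 where "HA1 = (\<lambda>((x,s),t). sp_ext (\<lambda>p. HA ((p,s),t)) (a x))"
  have cHB1: "continuous_map (prod_topology B1 unitI) (SPS (Suc n)) HB1"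
  proof -
    have c0: "continuous_map (prod_topology unitI (SP B2 y2)) (SPS (Suc n)) (\<lambda>(t,M). sp_ext (\<lambda>y. (\<lambda>(t,b). HB (b,t)) (t,y)) M)"
      by (rule cont_sp_ext_hom[OF unitI_lc unitI_H y2B cont_Hswap[OF cHB]]) (use HBb0 in auto)
    then have c1: "continuous_map (prod_topology unitI (SP B2 y2)) (SPS (Suc n)) (\<lambda>(t,M). sp_ext (\<lambda>y. HB (y,t)) M)"
      by simp
    have c2: "continuous_map (prod_topology B1 unitI) (prod_topology unitI (SP B2 y2)) (\<lambda>p. (snd p, bm (fst p)))"
      by (auto intro!: continuous_map_pairedI continuous_map_snd continuous_map_compose[OF continuous_map_fst bc', unfolded o_def])
    from continuous_map_compose[OF c2 c1] show ?thesis by (simp add: HB1_def o_def case_prod_unfold)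
  qed
  have cHA1: "continuous_map (prod_topology (prod_topology A1 unitI) unitI) (SPS (Suc n)) HA1"
  proof -
    have f1: "continuous_map (prod_topology (prod_topology unitI unitI) A2) unitI (\<lambda>p. fst (fst p))"
      using continuous_map_compose[OF continuous_map_fst continuous_map_fst] unfolding o_def .
    have f2: "continuous_map (prod_topology (prod_topology unitI unitI) A2) unitI (\<lambda>p. snd (fst p))"
      using continuous_map_compose[OF continuous_map_fst continuous_map_snd] unfolding o_def .
    have sw: "continuous_map (prod_topology (prod_topology unitI unitI) A2) (prod_topology (prod_topology A2 unitI) unitI)
                (\<lambda>p. ((snd p, fst (fst p)), snd (fst p)))"
      by (intro continuous_map_pairedI f1 f2 continuous_map_snd)
    have H: "continuous_map (prod_topology (prod_topology unitI unitI) A2) (SPS (Suc n)) (\<lambda>p. HA ((snd p, fst (fst p)), snd (fst p)))"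
      using continuous_map_compose[OF sw cHA] by (simp add: o_def)
    have c1: "continuous_map (prod_topology (prod_topology unitI unitI) (SP A2 x2)) (SPS (Suc n))
               (\<lambda>(z,M). sp_ext (\<lambda>y. (\<lambda>p. HA ((snd p, fst (fst p)), snd (fst p))) (z,y)) M)"
      by (rule cont_sp_ext_hom[OF II_lc II_H x2A H]) (use HAa in auto)
    have g1: "continuous_map (prod_topology (prod_topology A1 unitI) unitI) unitI (\<lambda>p. snd (fst p))"
      using continuous_map_compose[OF continuous_map_fst continuous_map_snd] unfolding o_def .
    have g2: "continuous_map (prod_topology (prod_topology A1 unitI) unitI) (SP A2 x2) (\<lambda>p. a (fst (fst p)))"
      using continuous_map_compose[OF continuous_map_fst continuous_map_compose[OF continuous_map_fst ac]] unfolding o_def .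
    have c2: "continuous_map (prod_topology (prod_topology A1 unitI) unitI) (prod_topology (prod_topology unitI unitI) (SP A2 x2))
                (\<lambda>p. ((snd (fst p), snd p), a (fst (fst p))))"
      by (intro continuous_map_pairedI g1 g2 continuous_map_snd)
    from continuous_map_compose[OF c2 c1] show ?thesis by (simp add: HA1_def o_def case_prod_unfold)
  qed
  show ?thesis
    unfolding conn_rel_def
  proof (intro exI conjI ballI)
    show "continuous_map (prod_topology B1 unitI) (SPS (Suc n)) HB1" by (rule cHB1)
    show "continuous_map (prod_topology (prod_topology A1 unitI) unitI) (SPS (Suc n)) HA1" by (rule cHA1)
  next
    fix b assume b: "b \<in> topspace B1"
    have M: "bm b \<in> sp_carrier B2 y2" using based_in[OF bm b] by simp
    have "HB1 (b,0) = sp_ext (\<beta> \<circ> g2) (bm b)"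
      unfolding HB1_def using HB01 carrier_mem[OF M] by (auto intro: sp_ext_cong)
    also have "\<dots> = sp_ext \<beta> (SPmap z2 g2 (bm b))" using sp_ext_SPmap[of \<beta> z2 g2, OF \<beta>0] by simp
    also have "\<dots> = (sp_ext \<beta> \<circ> c) (g1 b)" using cg b by simp
    finally show "HB1 (b, 0) = (sp_ext \<beta> \<circ> c) (g1 b)" .
    show "HB1 (b, 1) = {#}"
      unfolding HB1_def using HB01 carrier_mem[OF M] by (auto intro: sp_ext_zero)
  next
    fix t :: real assume "t \<in> {0..1}"
    show "HB1 (y1, t) = {#}" by (simp add: HB1_def by1)
  next
    fix x and s :: real assume x: "x \<in> topspace A1" and s: "s \<in> {0..1}"
    have M: "a x \<in> sp_carrier A2 x2" using based_in[OF a x] by simp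
    show "HA1 ((x, s), 0) = {#}"
      unfolding HA1_def using HA01 s carrier_mem[OF M] by (auto intro: sp_ext_zero)
    have "HA1 ((x, s), 1) = sp_ext (\<lambda>p. susp_cocycle n \<alpha> (p, s)) (a x)"
      unfolding HA1_def using HA01 s carrier_mem[OF M] by (auto intro: sp_ext_cong)
    also have "\<dots> = susp_cocycle n (sp_ext \<alpha> \<circ> a) (x, s)"
      by (simp add: susp_cocycle_def SPmap_sp_ext)
    finally show "HA1 ((x, s), 1) = susp_cocycle n (sp_ext \<alpha> \<circ> a) (x, s)" .
  next
    fix x and t :: real assume x: "x \<in> topspace A1" and t: "t \<in> {0..1}"
    have M: "a x \<in> sp_carrier A2 x2" using based_in[OF a x] by simp
    have "HA1 ((x, 0), t) = sp_ext ((\<lambda>q. HB (q,t)) \<circ> f2) (a x)"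
      unfolding HA1_def using HAx t carrier_mem[OF M] by (auto intro: sp_ext_cong)
    also have "\<dots> = sp_ext (\<lambda>q. HB (q,t)) (SPmap y2 f2 (a x))"
      using sp_ext_SPmap[of "\<lambda>q. HB (q,t)" y2 f2] HBb0 t by simp
    also have "\<dots> = HB1 (f1 x, t)" using bf x by (simp add: HB1_def)
    finally show "HA1 ((x, 0), t) = HB1 (f1 x, t)" .
    show "HA1 ((x, 1), t) = {#}"
      unfolding HA1_def using HAx t carrier_mem[OF M] by (auto intro: sp_ext_zero)
  next
    fix s t :: real assume "s \<in> {0..1}" "t \<in> {0..1}"
    show "HA1 ((x1, s), t) = {#}" by (simp add: HA1_def ax1)
  qed
qed


theorem lemma1p5:
  fixes A1 :: "'a1 topology" and B1 :: "'b1 topology" and C1 :: "'c1 topology"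
    and A2 :: "'a2 topology" and B2 :: "'b2 topology" and C2 :: "'c2 topology"
    and f1 :: "'a1 \<Rightarrow> 'b1" and g1 :: "'b1 \<Rightarrow> 'c1"
    and f2 :: "'a2 \<Rightarrow> 'b2" and g2 :: "'b2 \<Rightarrow> 'c2"
    and a :: "'a1 \<Rightarrow> 'a2 multiset" and b :: "'b1 \<Rightarrow> 'b2 multiset" and c :: "'c1 \<Rightarrow> 'c2 multiset"
  assumes seq1: "based_cofib_seq A1 x1 B1 y1 C1 z1 f1 g1"
    and seq2: "based_cofib_seq A2 x2 B2 y2 C2 z2 f2 g2"
    and a: "based_map A1 x1 (SP A2 x2) {#} a"
    and b: "based_map B1 y1 (SP B2 y2) {#} b"
    and c: "based_map C1 z1 (SP C2 z2) {#} c"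
    and bf: "\<forall>x\<in>topspace A1. b (f1 x) = SPmap y2 f2 (a x)"
    and cg: "\<forall>y\<in>topspace B1. c (g1 y) = SPmap z2 g2 (b y)"
  shows "\<forall>n. (\<forall>\<kappa>\<in>Hred C2 z2 n.
               sp_pull B1 y1 n b (pull B2 y2 n g2 \<kappa>) = pull B1 y1 n g1 (sp_pull C1 z1 n c \<kappa>))
          \<and> (\<forall>\<kappa>\<in>Hred B2 y2 n.
               sp_pull A1 x1 n a (pull A2 x2 n f2 \<kappa>) = pull A1 x1 n f1 (sp_pull B1 y1 n b \<kappa>))
          \<and> (\<forall>\<kappa>\<in>Hred A2 x2 n.
               sp_pull C1 z1 (Suc n) c (connecting A2 x2 B2 y2 C2 z2 f2 g2 n \<kappa>)
               = connecting A1 x1 B1 y1 C1 z1 f1 g1 n (sp_pull A1 x1 n a \<kappa>))"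
proof (intro allI conjI ballI)
  fix n :: nat
  have x1A: "x1 \<in> topspace A1" by (rule a0A[OF seq1])
  have y1B: "y1 \<in> topspace B1" by (rule b0B[OF seq1])
  have x2A: "x2 \<in> topspace A2" by (rule a0A[OF seq2])
  have y2B: "y2 \<in> topspace B2" by (rule b0B[OF seq2])
  have z2C: "z2 \<in> topspace C2" by (rule c0C[OF seq2])
  have g1b: "based_map B1 y1 C1 z1 g1" using gc[OF seq1] gb0[OF seq1] by (simp add: based_map_def)
  have g2b: "based_map B2 y2 C2 z2 g2" using gc[OF seq2] gb0[OF seq2] by (simp add: based_map_def)
  have f1b: "based_map A1 x1 B1 y1 f1" using fc[OF seq1] fa0[OF seq1] by (simp add: based_map_def)
  have f2b: "based_map A2 x2 B2 y2 f2" using fc[OF seq2] fa0[OF seq2] by (simp add: based_map_def)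
  {
    fix \<kappa> assume "\<kappa> \<in> Hred C2 z2 n"
    then show "sp_pull B1 y1 n b (pull B2 y2 n g2 \<kappa>) = pull B1 y1 n g1 (sp_pull C1 z1 n c \<kappa>)"
      by (rule naturality_square[OF g1b g2b b c cg y1B y2B])
  next
    fix \<kappa> assume "\<kappa> \<in> Hred B2 y2 n"
    then show "sp_pull A1 x1 n a (pull A2 x2 n f2 \<kappa>) = pull A1 x1 n f1 (sp_pull B1 y1 n b \<kappa>)"
      by (rule naturality_square[OF f1b f2b a b bf x1A x2A])
  next
    fix \<kappa> assume \<kappa>: "\<kappa> \<in> Hred A2 x2 n"
    obtain \<alpha>0 where a0: "cocycle A2 x2 n \<alpha>0" and k: "\<kappa> = hcls A2 x2 n \<alpha>0"
      using \<kappa> by (auto simp: Hred_def)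
    define \<alpha> where "\<alpha> = rep \<kappa>"
    have al: "cocycle A2 x2 n \<alpha>" using rep_hcls[OF a0] by (simp add: \<alpha>_def k)
    define \<beta>2 where "\<beta>2 = (SOME \<beta>. cocycle C2 z2 (Suc n) \<beta> \<and> conn_rel A2 x2 B2 y2 f2 g2 n \<alpha> \<beta>)"
    have \<beta>2: "cocycle C2 z2 (Suc n) \<beta>2 \<and> conn_rel A2 x2 B2 y2 f2 g2 n \<alpha> \<beta>2"
      unfolding \<beta>2_def by (rule someI_ex[OF conn_exists[OF seq2 al]])
    have con2: "connecting A2 x2 B2 y2 C2 z2 f2 g2 n \<kappa> = hcls C2 z2 (Suc n) \<beta>2"
      by (simp add: connecting_def \<beta>2_def \<alpha>_def)
    define \<gamma> where "\<gamma> = rep (hcls C2 z2 (Suc n) \<beta>2)"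
    have hg: "HP C2 z2 (Suc n) \<beta>2 \<gamma>" using rep_hcls[of C2 z2 "Suc n" \<beta>2] \<beta>2 by (simp add: \<gamma>_def)
    have LHS: "sp_pull C1 z1 (Suc n) c (connecting A2 x2 B2 y2 C2 z2 f2 g2 n \<kappa>) = hcls C1 z1 (Suc n) (sp_ext \<gamma> \<circ> c)"
      by (simp add: con2 sp_pull_def \<gamma>_def)
    have h1: "HP C1 z1 (Suc n) (sp_ext \<beta>2 \<circ> c) (sp_ext \<gamma> \<circ> c)"
      by (rule HP_sp_ext[OF hg z2C c])
    have ca: "cocycle A1 x1 n (sp_ext \<alpha> \<circ> a)" by (rule cocycle_sp_ext[OF al x2A a])
    define \<alpha>' where "\<alpha>' = rep (sp_pull A1 x1 n a \<kappa>)"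
    have ha': "cocycle A1 x1 n \<alpha>' \<and> HP A1 x1 n (sp_ext \<alpha> \<circ> a) \<alpha>'"
      using rep_hcls[OF ca] by (simp add: \<alpha>'_def sp_pull_def \<alpha>_def)
    define \<beta>1 where "\<beta>1 = (SOME \<beta>. cocycle C1 z1 (Suc n) \<beta> \<and> conn_rel A1 x1 B1 y1 f1 g1 n \<alpha>' \<beta>)"
    have \<beta>1: "cocycle C1 z1 (Suc n) \<beta>1 \<and> conn_rel A1 x1 B1 y1 f1 g1 n \<alpha>' \<beta>1"
      unfolding \<beta>1_def by (rule someI_ex[OF conn_exists[OF seq1]]) (use ha' in blast)
    have RHS: "connecting A1 x1 B1 y1 C1 z1 f1 g1 n (sp_pull A1 x1 n a \<kappa>) = hcls C1 z1 (Suc n) \<beta>1"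
      by (simp add: connecting_def \<beta>1_def \<alpha>'_def)
    have nat: "conn_rel A1 x1 B1 y1 f1 g1 n (sp_ext \<alpha> \<circ> a) (sp_ext \<beta>2 \<circ> c)"
      by (rule conn_natural[OF seq1 seq2 a b c bf cg]) (use \<beta>2 in auto)
    have cc: "cocycle C1 z1 (Suc n) (sp_ext \<beta>2 \<circ> c)" by (rule cocycle_sp_ext[OF _ z2C c]) (use \<beta>2 in auto)
    have h2: "HP C1 z1 (Suc n) (sp_ext \<beta>2 \<circ> c) \<beta>1"
      by (rule conn_unique[OF seq1 nat cc]) (use \<beta>1 ha' in auto)
    have "hcls C1 z1 (Suc n) (sp_ext \<gamma> \<circ> c) = hcls C1 z1 (Suc n) \<beta>1"
      using hcls_eq[OF homotopic_with_symD[OF h1]] hcls_eq[OF h2] by simp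
    then show "sp_pull C1 z1 (Suc n) c (connecting A2 x2 B2 y2 C2 z2 f2 g2 n \<kappa>)
               = connecting A1 x1 B1 y1 C1 z1 f1 g1 n (sp_pull A1 x1 n a \<kappa>)"
      unfolding LHS RHS .
  }
qed


end
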